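(* Fix $n$, generators $x_{i_1},\dots,x_{i_k}\in\mathcal{B}_n$, an index $j$, integers $a_h$ ($h\ne j$), and set $V(e)=V_n(x_{i_1}^{a_1}\cdots x_{i_j}^{e}\cdots x_{i_k}^{a_k})$ for $e\in\mathbb{Z}$. Then the sequence $(V(e))_{e\in\mathbb{Z}}$ contains at most two terms equal to $1$, and if $V(a)=V(b)=1$ with $a\ne b$, then $|a-b|\in\{1,2\}$.
   Context: $\mathcal{B}_n$ is the Artin braid group with generators $x_1,\dots,x_{n-1}$; $V_n(\beta)$ is the Jones polynomial of the closure of $\beta$, normalized by $V(\text{unknot})=1$ and $q^{-1}V_{L_+}-qV_{L_-}=(q^{1/2}-q^{-1/2})V_{L_0}$, as a Laurent polynomial in $s=q^{-1/2}$. Conventions: closures of $\alpha x_i^{e+2}\gamma$, $\alpha x_i^{e+1}\gamma$, $\alpha x_i^{e}\gamma$ play the roles of $L_-,L_0,L_+$ (e.g. the closure of $x_1^2\in\mathcal B_2$ has Jones polynomial $-s-s^5$). *)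

theory Defs
  imports "HOL-Computational_Algebra.Formal_Laurent_Series"
begin

text \<open>A braid word in B_n: a list of letters (i, p); (i, True) is the generator x_i,
  (i, False) its inverse x_i^(-1), where 1 \<le> i \<le> n - 1.\<close>
type_synonym letter = "nat \<times> bool"

definition braid_word :: "(nat \<Rightarrow> nat) \<Rightarrow> (nat \<Rightarrow> int) \<Rightarrow> nat \<Rightarrow> letter list" where
  "braid_word idx a k = concat (map (\<lambda>h. replicate (nat \<bar>a h\<bar>) (idx h, a h \<ge> 0)) [1..<Suc k])"

text \<open>Crossing sign. By the paper's convention (closure of x_1^2 has V = -s - s^5, a
  negative Hopf link in the variable t = q), x_i is a negative crossing.\<close>
definition crossing_sign :: "letter \<Rightarrow> int" where
  "crossing_sign l = (if snd l then -1 else 1)"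

definition writhe :: "letter list \<Rightarrow> int" where
  "writhe w = sum_list (map crossing_sign w)"

text \<open>Vertices of the closed braid diagram after smoothing: (level, strand).\<close>
definition diagram_vertices :: "nat \<Rightarrow> letter list \<Rightarrow> (nat \<times> nat) set" where
  "diagram_vertices n w = {0..length w} \<times> {1..n}"

text \<open>Arcs of the state obtained by smoothing the letters in S horizontally (cup-cap, U_i)
  and the other letters vertically (identity); the last family of arcs is the closure.\<close>
definition smoothing_edges :: "nat \<Rightarrow> letter list \<Rightarrow> nat set \<Rightarrow> ((nat \<times> nat) \<times> (nat \<times> nat)) set" where
  "smoothing_edges n w S =
     {((l, j), (Suc l, j)) | l j. l < length w \<and> 1 \<le> j \<and> j \<le> n \<and>
                                 \<not> (l \<in> S \<and> (j = fst (w ! l) \<or> j = Suc (fst (w ! l))))}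
   \<union> {((l, fst (w ! l)), (l, Suc (fst (w ! l)))) | l. l \<in> S \<and> l < length w}
   \<union> {((Suc l, fst (w ! l)), (Suc l, Suc (fst (w ! l)))) | l. l \<in> S \<and> l < length w}
   \<union> {((length w, j), (0, j)) | j. 1 \<le> j \<and> j \<le> n}"

definition state_loops :: "nat \<Rightarrow> letter list \<Rightarrow> nat set \<Rightarrow> nat" where
  "state_loops n w S =
     card (diagram_vertices n w //
           Restr ((smoothing_edges n w S \<union> (smoothing_edges n w S)\<inverse>)\<^sup>*) (diagram_vertices n w))"

text \<open>Number of A-smoothings: a crossing is A-smoothed when it is smoothed vertically and has
  sign +1, or horizontally and has sign -1 (Kauffman: positive crossing = A id + A^-1 U).\<close>
definition A_count :: "letter list \<Rightarrow> nat set \<Rightarrow> nat" where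
  "A_count w S = card {l. l < length w \<and> ((l \<notin> S) = (crossing_sign (w ! l) = 1))}"

definition B_count :: "letter list \<Rightarrow> nat set \<Rightarrow> nat" where
  "B_count w S = length w - A_count w S"

text \<open>Jones polynomial of the closure of w in B_n, via the Kauffman bracket:
  V = (-A^3)^(-writhe) \<Sum>_S A^(a-b) (-A^2-A^-2)^(loops-1), A = t^(-1/4),
  written as a Laurent polynomial in s = A^2 = q^(-1/2) (all exponents are even).\<close>
definition jones :: "nat \<Rightarrow> letter list \<Rightarrow> int fls" where
  "jones n w = (\<Sum>S\<in>Pow {..<length w}.
      fls_const ((-1) ^ nat \<bar>writhe w\<bar>)
      * fls_X_intpow ((int (A_count w S) - int (B_count w S) - 3 * writhe w) div 2)
      * (- (fls_X + fls_X_inv)) ^ (state_loops n w S - 1))"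

end

theory Submission
  imports Defs
begin


definition conn :: "('v \<times> 'v) set \<Rightarrow> 'v set \<Rightarrow> ('v \<times> 'v) set" where
  "conn E V = Restr ((E \<union> E\<inverse>)\<^sup>*) V"

lemma conn_refl: "x \<in> V \<Longrightarrow> (x,x) \<in> conn E V"
  by (simp add: conn_def)

lemma conn_sym: "(x,y) \<in> conn E V \<Longrightarrow> (y,x) \<in> conn E V"
proof -
  assume "(x,y) \<in> conn E V"
  hence "(x,y) \<in> (E \<union> E\<inverse>)\<^sup>*" "x \<in> V" "y \<in> V" by (auto simp: conn_def)
  hence "(y,x) \<in> ((E \<union> E\<inverse>)\<inverse>)\<^sup>*" by (simp add: rtrancl_converse)
  moreover have "(E \<union> E\<inverse>)\<inverse> = E \<union> E\<inverse>" by auto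
  ultimately show ?thesis using \<open>x\<in>V\<close> \<open>y\<in>V\<close> by (simp add: conn_def)
qed

lemma conn_trans: "(x,y) \<in> conn E V \<Longrightarrow> (y,z) \<in> conn E V \<Longrightarrow> (x,z) \<in> conn E V"
  by (auto simp: conn_def)

lemma conn_edge: "(x,y) \<in> E \<Longrightarrow> x \<in> V \<Longrightarrow> y \<in> V \<Longrightarrow> (x,y) \<in> conn E V"
  by (auto simp: conn_def)

lemma conn_edge': "(y,x) \<in> E \<Longrightarrow> x \<in> V \<Longrightarrow> y \<in> V \<Longrightarrow> (x,y) \<in> conn E V"
  by (auto simp: conn_def)

lemma conn_in: "(x,y) \<in> conn E V \<Longrightarrow> x \<in> V \<and> y \<in> V"
  by (auto simp: conn_def)

lemma equiv_conn: "equiv V (conn E V)"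
proof (rule equivI)
  show "refl_on V (conn E V)"
    by (rule refl_onI) (auto simp: conn_def)
  show "sym (conn E V)" by (rule symI) (rule conn_sym)
  show "trans (conn E V)" by (rule transI) (rule conn_trans)
  show "conn E V \<subseteq> V \<times> V" by (auto simp: conn_def)
qed

lemma comp_count:
  assumes fin: "finite V"
    and EV: "E \<subseteq> V \<times> V"
    and Ccl: "\<And>x y. (x,y) \<in> E \<Longrightarrow> x \<in> C \<longleftrightarrow> y \<in> C"
    and CV: "C \<subseteq> V"
    and Cconn: "\<And>u v. u \<in> C \<Longrightarrow> v \<in> C \<Longrightarrow> (u,v) \<in> conn E V"
    and phi: "\<phi> ` (V - C) = V'"
    and e1: "\<And>u v. (u,v) \<in> E \<Longrightarrow> u \<notin> C \<Longrightarrow> v \<notin> C \<Longrightarrow> (\<phi> u, \<phi> v) \<in> conn E' V'"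
    and e2: "\<And>u' v'. (u',v') \<in> E' \<Longrightarrow> \<exists>u v. u \<in> V - C \<and> v \<in> V - C \<and> \<phi> u = u' \<and> \<phi> v = v' \<and> (u,v) \<in> conn E V"
    and e3: "\<And>u v. u \<in> V - C \<Longrightarrow> v \<in> V - C \<Longrightarrow> \<phi> u = \<phi> v \<Longrightarrow> (u,v) \<in> conn E V"
  shows "card (V // conn E V) = card (V' // conn E' V') + (if C = {} then 0 else 1)"
proof -
  let ?R = "conn E V" and ?R' = "conn E' V'"
  have phiV: "\<phi> x \<in> V'" if "x \<in> V - C" for x using that unfolding phi[symmetric] by (rule imageI)
  have phiS: "\<exists>x. x \<in> V - C \<and> \<phi> x = y" if "y \<in> V'" for y using that unfolding phi[symmetric] by (rule imageE) auto
  have fwd: "(\<phi> u, \<phi> v) \<in> ?R'" if "(u,v) \<in> ?R" "u \<notin> C" for u v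
  proof -
    from that have p: "(u,v) \<in> (E \<union> E\<inverse>)\<^sup>*" and uV: "u \<in> V" by (auto simp: conn_def)
    have "v \<in> V - C \<and> (\<phi> u, \<phi> v) \<in> ?R'" using p
    proof (induction rule: rtrancl_induct)
      case base
      have "\<phi> u \<in> V'" using uV that(2) phiV by blast
      then have "(\<phi> u, \<phi> u) \<in> ?R'" by (rule conn_refl)
      then show ?case using uV that(2) by simp
    next
      case (step y z)
      from step.IH have yC: "y \<in> V - C" and h: "(\<phi> u, \<phi> y) \<in> ?R'" by auto
      from step.hyps(2) show ?case
      proof
        assume yz: "(y,z) \<in> E"
        have "z \<in> V" using EV yz by blast
        moreover have "z \<notin> C" using Ccl[OF yz] yC by simp
        ultimately have zC: "z \<in> V - C" by simp
        have "(\<phi> y, \<phi> z) \<in> ?R'" using e1[OF yz] yC zC by simp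
        from conn_trans[OF h this] show ?thesis using zC by simp
      next
        assume "(y,z) \<in> E\<inverse>"
        hence zy: "(z,y) \<in> E" by simp
        have "z \<in> V" using EV zy by blast
        moreover have "z \<notin> C" using Ccl[OF zy] yC by simp
        ultimately have zC: "z \<in> V - C" by simp
        have "(\<phi> z, \<phi> y) \<in> ?R'" using e1[OF zy] yC zC by simp
        from conn_trans[OF h conn_sym[OF this]] show ?thesis using zC by simp
      qed
    qed
    thus ?thesis by blast
  qed
  have bwd: "(u,v) \<in> ?R" if "(\<phi> u, \<phi> v) \<in> ?R'" "u \<in> V - C" "v \<in> V - C" for u v
  proof -
    from that have p: "(\<phi> u, \<phi> v) \<in> (E' \<union> E'\<inverse>)\<^sup>*" by (auto simp: conn_def)
    have "\<forall>x \<in> V - C. \<phi> x = \<phi> v \<longrightarrow> (u,x) \<in> ?R" using p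
    proof (induction rule: rtrancl_induct)
      case base
      show ?case
      proof (intro ballI impI)
        fix x assume "x \<in> V - C" "\<phi> x = \<phi> u"
        thus "(u,x) \<in> ?R" using e3[OF that(2)] by simp
      qed
    next
      case (step y z)
      show ?case
      proof (intro ballI impI)
        fix x assume xC: "x \<in> V - C" and xz: "\<phi> x = z"
        have "\<exists>a b. a \<in> V - C \<and> b \<in> V - C \<and> \<phi> a = y \<and> \<phi> b = z \<and> (a,b) \<in> ?R"
          using step.hyps(2)
        proof
          assume "(y,z) \<in> E'"
          from e2[OF this] show ?thesis .
        next
          assume "(y,z) \<in> E'\<inverse>"
          hence "(z,y) \<in> E'" by simp
          from e2[OF this] obtain a b where "a \<in> V - C" "b \<in> V - C" "\<phi> a = z" "\<phi> b = y" "(a,b) \<in> ?R"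
            by blast
          thus ?thesis using conn_sym[of a b E V] by blast
        qed
        then obtain a b where ab: "a \<in> V - C" "b \<in> V - C" "\<phi> a = y" "\<phi> b = z" "(a,b) \<in> ?R"
          by blast
        have ua: "(u,a) \<in> ?R" using step.IH ab(1,3) by simp
        have bx: "(b,x) \<in> ?R" using e3[OF ab(2) xC] ab(4) xz by simp
        show "(u,x) \<in> ?R" using conn_trans[OF conn_trans[OF ua ab(5)] bx] .
      qed
    qed
    thus ?thesis using that(3) by simp
  qed
  have cls_sub: "?R``{x} \<subseteq> V - C" if "x \<in> V - C" for x
  proof
    fix y assume "y \<in> ?R``{x}"
    hence xy: "(x,y) \<in> ?R" by simp
    have p: "(x,y) \<in> (E \<union> E\<inverse>)\<^sup>*" and "y \<in> V" using xy by (auto simp: conn_def)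
    have "y \<notin> C" using p
    proof (induction rule: rtrancl_induct)
      case base then show ?case using that by simp
    next
      case (step y z) then show ?case using Ccl[of y z] Ccl[of z y] by auto
    qed
    thus "y \<in> V - C" using \<open>y \<in> V\<close> by simp
  qed
  have img: "\<phi> ` (?R``{x}) = ?R'``{\<phi> x}" if "x \<in> V - C" for x
  proof
    show "\<phi> ` (?R``{x}) \<subseteq> ?R'``{\<phi> x}"
    proof (rule image_subsetI)
      fix y assume "y \<in> ?R``{x}"
      hence "(x,y) \<in> ?R" by simp
      from fwd[OF this] that show "\<phi> y \<in> ?R'``{\<phi> x}" by simp
    qed
  next
    show "?R'``{\<phi> x} \<subseteq> \<phi> ` (?R``{x})"
    proof
      fix y' assume "y' \<in> ?R'``{\<phi> x}"
      hence xy': "(\<phi> x, y') \<in> ?R'" by simp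
      hence "y' \<in> V'" using conn_in by fast
      then obtain y where y: "y \<in> V - C" "\<phi> y = y'" using phiS by blast
      hence "(x,y) \<in> ?R" using bwd[OF _ that y(1)] xy' by simp
      thus "y' \<in> \<phi> ` (?R``{x})" using y by blast
    qed
  qed
  have bij: "bij_betw (\<lambda>X. \<phi> ` X) ((V - C) // ?R) (V' // ?R')"
  proof (rule bij_betw_imageI)
    show "inj_on (\<lambda>X. \<phi> ` X) ((V - C) // ?R)"
    proof (rule inj_onI)
      fix X Y assume X: "X \<in> (V - C) // ?R" and Y: "Y \<in> (V - C) // ?R" and eq: "\<phi> ` X = \<phi> ` Y"
      from X obtain x where x: "x \<in> V - C" "X = ?R``{x}" by (auto elim: quotientE)
      from Y obtain y where y: "y \<in> V - C" "Y = ?R``{y}" by (auto elim: quotientE)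
      have "\<phi> y \<in> V'" using y phiV by blast
      hence "\<phi> y \<in> ?R'``{\<phi> y}" using conn_refl[OF \<open>\<phi> y \<in> V'\<close>, of E'] by simp
      hence "\<phi> y \<in> ?R'``{\<phi> x}" using eq img[OF x(1)] img[OF y(1)] x(2) y(2) by simp
      hence "(\<phi> x, \<phi> y) \<in> ?R'" by simp
      hence "(x,y) \<in> ?R" using bwd[OF _ x(1) y(1)] by simp
      from equiv_class_eq[OF equiv_conn this] show "X = Y" unfolding x(2) y(2) .
    qed
  next
    show "(\<lambda>X. \<phi> ` X) ` ((V - C) // ?R) = V' // ?R'"
    proof
      show "(\<lambda>X. \<phi> ` X) ` ((V - C) // ?R) \<subseteq> V' // ?R'"
      proof (rule image_subsetI)
        fix X assume "X \<in> (V - C) // ?R"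
        then obtain x where x: "x \<in> V - C" "X = ?R``{x}" by (auto elim: quotientE)
        have "?R'``{\<phi> x} \<in> V' // ?R'" using quotientI[OF phiV[OF x(1)]] .
        thus "\<phi> ` X \<in> V' // ?R'" using img[OF x(1)] x(2) by simp
      qed
    next
      show "V' // ?R' \<subseteq> (\<lambda>X. \<phi> ` X) ` ((V - C) // ?R)"
      proof
        fix Y assume "Y \<in> V' // ?R'"
        then obtain y' where "y' \<in> V'" "Y = ?R'``{y'}" by (auto elim: quotientE)
        then obtain y where y: "y \<in> V - C" "\<phi> y = y'" using phiS by blast
        have "Y = \<phi> ` (?R``{y})" using img[OF y(1)] y(2) \<open>Y = ?R'``{y'}\<close> by simp
        moreover have "?R``{y} \<in> (V - C) // ?R" using quotientI[OF y(1)] .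
        ultimately show "Y \<in> (\<lambda>X. \<phi> ` X) ` ((V - C) // ?R)" by (rule image_eqI)
      qed
    qed
  qed
  have c1: "card ((V - C) // ?R) = card (V' // ?R')" using bij_betw_same_card[OF bij] .
  show ?thesis
  proof (cases "C = {}")
    case True then show ?thesis using c1 by simp
  next
    case False
    then obtain c where c: "c \<in> C" by blast
    have Ccls: "?R``{c} = C"
    proof
      show "C \<subseteq> ?R``{c}"
      proof
        fix y assume "y \<in> C" thus "y \<in> ?R``{c}" using Cconn[OF c] by simp
      qed
    next
      show "?R``{c} \<subseteq> C"
      proof
        fix y assume "y \<in> ?R``{c}"
        hence p: "(c,y) \<in> (E \<union> E\<inverse>)\<^sup>*" by (auto simp: conn_def)
        thus "y \<in> C" using p
        proof (induction rule: rtrancl_induct)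
          case base then show ?case using c by simp
        next
          case (step y z) then show ?case using Ccl[of y z] Ccl[of z y] by auto
        qed
      qed
    qed
    have "V // ?R = insert C ((V - C) // ?R)"
    proof -
      have "V // ?R = (\<Union>x\<in>V. {?R``{x}})" by (simp add: quotient_def)
      also have "\<dots> = (\<Union>x\<in>C \<union> (V - C). {?R``{x}})" using CV by (simp add: Un_absorb1 Un_Diff_cancel)
      also have "\<dots> = (\<Union>x\<in>C. {?R``{x}}) \<union> (\<Union>x\<in>V-C. {?R``{x}})" by (rule UN_Un)
      also have "(\<Union>x\<in>C. {?R``{x}}) = {C}"
      proof -
        have "?R``{x} = C" if "x \<in> C" for x
          using Ccls equiv_class_eq[OF equiv_conn Cconn[OF c that]] by simp
        thus ?thesis using c by auto
      qed
      finally show ?thesis by (simp add: quotient_def)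
    qed
    moreover have "C \<notin> (V - C) // ?R"
    proof
      assume "C \<in> (V - C) // ?R"
      then obtain x where "x \<in> V - C" "C = ?R``{x}" by (auto elim: quotientE)
      have "x \<in> ?R``{x}" using conn_refl[of x V E] \<open>x \<in> V - C\<close> by simp
      hence "x \<in> C" using \<open>C = ?R``{x}\<close> by simp
      thus False using \<open>x \<in> V - C\<close> by simp
    qed
    moreover have "finite ((V - C) // ?R)"
    proof -
      have "finite (V - C)" using fin by simp
      thus ?thesis unfolding quotient_def by simp
    qed
    ultimately show ?thesis using c1 False by simp
  qed
qed


definition valid :: "nat \<Rightarrow> letter list \<Rightarrow> bool" where
  "valid n w = (\<forall>l<length w. 1 \<le> fst (w!l) \<and> fst (w!l) < n)"

definition delw :: "nat \<Rightarrow> 'a list \<Rightarrow> 'a list" where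
  "delw q w = take q w @ drop (Suc q) w"

definition dels :: "nat \<Rightarrow> nat set \<Rightarrow> nat set" where
  "dels q S = {l. (l < q \<and> l \<in> S) \<or> (q \<le> l \<and> Suc l \<in> S)}"

definition phi :: "nat \<Rightarrow> nat \<times> nat \<Rightarrow> nat \<times> nat" where
  "phi q = (\<lambda>(l,j). (if l \<le> q then l else l - 1, j))"

lemma phi_simp[simp]: "phi q (l,j) = (if l \<le> q then l else l - 1, j)"
  by (simp add: phi_def)

lemma dels_mem[simp]: "l \<in> dels q S \<longleftrightarrow> (if l < q then l \<in> S else Suc l \<in> S)"
  by (auto simp: dels_def)

lemma delw_len[simp]: "q < length w \<Longrightarrow> length (delw q w) = length w - 1"
  by (simp add: delw_def)

lemma delw_nth: "q < length w \<Longrightarrow> l < length w - 1 \<Longrightarrow> delw q w ! l = w ! (if l < q then l else Suc l)"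
  by (auto simp: delw_def nth_append min_def)

lemma edge_cases[consumes 1, case_names vert bot top clo]:
  assumes "(u,v) \<in> smoothing_edges n w S"
  obtains (vert) l j where "u = (l,j)" "v = (Suc l, j)" "l < length w" "1 \<le> j" "j \<le> n"
      "\<not> (l \<in> S \<and> (j = fst (w!l) \<or> j = Suc (fst (w!l))))"
    | (bot) l where "u = (l, fst (w!l))" "v = (l, Suc (fst (w!l)))" "l \<in> S" "l < length w"
    | (top) l where "u = (Suc l, fst (w!l))" "v = (Suc l, Suc (fst (w!l)))" "l \<in> S" "l < length w"
    | (clo) j where "u = (length w, j)" "v = (0, j)" "1 \<le> j" "j \<le> n"
  using assms unfolding smoothing_edges_def by blast

lemma edge_vert: "l < length w \<Longrightarrow> 1 \<le> j \<Longrightarrow> j \<le> n \<Longrightarrow>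
    \<not> (l \<in> S \<and> (j = fst (w!l) \<or> j = Suc (fst (w!l)))) \<Longrightarrow> ((l,j),(Suc l,j)) \<in> smoothing_edges n w S"
  unfolding smoothing_edges_def by blast
lemma edge_bot: "l \<in> S \<Longrightarrow> l < length w \<Longrightarrow> ((l, fst (w!l)), (l, Suc (fst (w!l)))) \<in> smoothing_edges n w S"
  unfolding smoothing_edges_def by blast
lemma edge_top: "l \<in> S \<Longrightarrow> l < length w \<Longrightarrow> ((Suc l, fst (w!l)), (Suc l, Suc (fst (w!l)))) \<in> smoothing_edges n w S"
  unfolding smoothing_edges_def by blast
lemma edge_clo: "1 \<le> j \<Longrightarrow> j \<le> n \<Longrightarrow> ((length w, j), (0, j)) \<in> smoothing_edges n w S"
  unfolding smoothing_edges_def by blast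

lemma edge_in_V: "valid n w \<Longrightarrow> (u,v) \<in> smoothing_edges n w S \<Longrightarrow> u \<in> diagram_vertices n w \<and> v \<in> diagram_vertices n w"
proof -
  assume vw: "valid n w" and x: "(u,v) \<in> smoothing_edges n w S"
  from x show ?thesis
  proof (cases rule: edge_cases)
    case (vert l j) then show ?thesis by (auto simp: diagram_vertices_def)
  next
    case (bot l) then show ?thesis using vw by (auto simp: diagram_vertices_def valid_def)
  next
    case (top l) then show ?thesis using vw by (auto simp: diagram_vertices_def valid_def)
  next
    case (clo j) then show ?thesis by (auto simp: diagram_vertices_def)
  qed
qed

lemma edges_in_V: "valid n w \<Longrightarrow> smoothing_edges n w S \<subseteq> diagram_vertices n w \<times> diagram_vertices n w"
  using edge_in_V by fast

lemma loops_conn: "state_loops n w S = card (diagram_vertices n w // conn (smoothing_edges n w S) (diagram_vertices n w))"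
  by (simp add: state_loops_def conn_def)


lemma shift_letter:
  assumes q: "q < length w" and l: "l < length w" "l \<noteq> q" and l'_def: "l' = (if l < q then l else l - 1)"
  shows "l' < length w - 1" "delw q w ! l' = w ! l" "(l' \<in> dels q S) = (l \<in> S)"
    "phi q (l,j) = (l',j)" "phi q (Suc l, j) = (Suc l', j)"
  using q l by (auto simp: l'_def delw_nth)

lemma back_letter:
  assumes "l' < length w - 1"
  shows "(if l' < q then l' else Suc l') < length w" "(if l' < q then l' else Suc l') \<noteq> q"
    "l' = (if (if l' < q then l' else Suc l') < q then (if l' < q then l' else Suc l') else (if l' < q then l' else Suc l') - 1)"
  using assms by auto

lemma phi_image:
  assumes q: "q < length w"
  shows "phi q ` diagram_vertices n w = diagram_vertices n (delw q w)"
proof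
  show "phi q ` diagram_vertices n w \<subseteq> diagram_vertices n (delw q w)"
    using q by (auto simp: diagram_vertices_def)
next
  show "diagram_vertices n (delw q w) \<subseteq> phi q ` diagram_vertices n w"
  proof
    fix x assume x: "x \<in> diagram_vertices n (delw q w)"
    obtain l j where lj: "x = (l,j)" by (cases x)
    show "x \<in> phi q ` diagram_vertices n w"
    proof (cases "l \<le> q")
      case True
      hence "phi q (l,j) = x" "(l,j) \<in> diagram_vertices n w" using x q lj by (auto simp: diagram_vertices_def)
      thus ?thesis by (metis image_eqI)
    next
      case False
      hence "phi q (Suc l,j) = x" "(Suc l,j) \<in> diagram_vertices n w" using x q lj by (auto simp: diagram_vertices_def)
      thus ?thesis by (metis image_eqI)
    qed
  qed
qed

lemma phi_eq_cases:
  assumes "phi q u = phi q v"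
  shows "u = v \<or> (\<exists>j. u = (q,j) \<and> v = (Suc q, j)) \<or> (\<exists>j. v = (q,j) \<and> u = (Suc q, j))"
proof -
  obtain a j where u: "u = (a,j)" by (cases u)
  obtain b j' where v: "v = (b,j')" by (cases v)
  from assms u v have "j = j'" by (simp split: if_splits)
  moreover from assms u v have "(if a \<le> q then a else a - 1) = (if b \<le> q then b else b - 1)" by simp
  hence "a = b \<or> (a = q \<and> b = Suc q) \<or> (b = q \<and> a = Suc q)" by (auto split: if_splits)
  ultimately show ?thesis using u v by auto
qed

lemma D1:
  assumes vw: "valid n w" and q: "q < length w" and qS: "q \<notin> S"
  shows "state_loops n w S = state_loops n (delw q w) (dels q S)"
proof -
  let ?V = "diagram_vertices n w" and ?E = "smoothing_edges n w S"
  let ?W = "delw q w" and ?S = "dels q S"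
  let ?V' = "diagram_vertices n ?W" and ?E' = "smoothing_edges n ?W ?S"
  have vW: "valid n ?W" using vw q unfolding valid_def by (auto simp: delw_nth)
  have lenW: "length ?W = length w - 1" using q by simp
  have "card (?V // conn ?E ?V) = card (?V' // conn ?E' ?V') + (if ({}::(nat\<times>nat) set) = {} then 0 else 1)"
  proof (rule comp_count[where C = "{}::(nat\<times>nat) set" and \<phi> = "phi q"])
    show "finite ?V" by (simp add: diagram_vertices_def)
    show "?E \<subseteq> ?V \<times> ?V" using edges_in_V[OF vw] .
    show "phi q ` (?V - {}) = ?V'" using phi_image[OF q] by simp
  next
    fix u v assume uv: "(u,v) \<in> ?E"
    have uvV: "u \<in> ?V" "v \<in> ?V" using edge_in_V[OF vw uv] by auto
    have inV': "phi q x \<in> ?V'" if "x \<in> ?V" for x using phi_image[OF q] imageI[OF that, of "phi q"] by simp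
    from uv show "(phi q u, phi q v) \<in> conn ?E' ?V'"
    proof (cases rule: edge_cases)
      case (vert l j)
      show ?thesis
      proof (cases "l = q")
        case True
        hence "phi q u = phi q v" using vert by simp
        thus ?thesis using conn_refl[OF inV'[OF uvV(1)]] by simp
      next
        case False
        define l' where "l' = (if l < q then l else l - 1)"
        note sl = shift_letter[OF q vert(3) False l'_def]
        have "((l',j),(Suc l',j)) \<in> ?E'"
          by (rule edge_vert) (use vert sl in \<open>simp_all add: lenW\<close>)
        hence "(phi q u, phi q v) \<in> ?E'" unfolding vert sl(4,5) .
        thus ?thesis using conn_edge[OF _ inV'[OF uvV(1)] inV'[OF uvV(2)]] by simp
      qed
    next
      case (bot l)
      have lq: "l \<noteq> q" using bot qS by auto
      define l' where "l' = (if l < q then l else l - 1)"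
      note sl = shift_letter[OF q bot(4) lq l'_def]
      have "((l', fst (?W!l')), (l', Suc (fst (?W!l')))) \<in> ?E'"
        by (rule edge_bot) (use sl bot in \<open>simp_all add: lenW\<close>)
      hence "(phi q u, phi q v) \<in> ?E'" unfolding bot sl(4) sl(2) .
      thus ?thesis using conn_edge[OF _ inV'[OF uvV(1)] inV'[OF uvV(2)]] by simp
    next
      case (top l)
      have lq: "l \<noteq> q" using top qS by auto
      define l' where "l' = (if l < q then l else l - 1)"
      note sl = shift_letter[OF q top(4) lq l'_def]
      have "((Suc l', fst (?W!l')), (Suc l', Suc (fst (?W!l')))) \<in> ?E'"
        by (rule edge_top) (use sl top in \<open>simp_all add: lenW\<close>)
      hence "(phi q u, phi q v) \<in> ?E'" unfolding top sl(5) sl(2) .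
      thus ?thesis using conn_edge[OF _ inV'[OF uvV(1)] inV'[OF uvV(2)]] by simp
    next
      case (clo j)
      have "(phi q u, phi q v) \<in> ?E'"
        using clo q edge_clo[of j n ?W ?S] by (simp add: lenW)
      thus ?thesis using conn_edge[OF _ inV'[OF uvV(1)] inV'[OF uvV(2)]] by simp
    qed
  next
    fix u' v' assume uv': "(u',v') \<in> ?E'"
    have connE: "(u,v) \<in> conn ?E ?V" if "(u,v) \<in> ?E" for u v
      using conn_edge[OF that] edge_in_V[OF vw that] by simp
    from uv' show "\<exists>u v. u \<in> ?V - {} \<and> v \<in> ?V - {} \<and> phi q u = u' \<and> phi q v = v' \<and> (u, v) \<in> conn ?E ?V"
    proof (cases rule: edge_cases)
      case (vert l' j)
      define l where "l = (if l' < q then l' else Suc l')"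
      have l: "l < length w" "l \<noteq> q" "l' = (if l < q then l else l - 1)"
        using back_letter[of l' w q] vert(3) lenW unfolding l_def by auto
      note sl = shift_letter[OF q l(1,2) l(3)]
      have e: "((l,j),(Suc l,j)) \<in> ?E" by (rule edge_vert) (use vert sl l in \<open>simp_all add: lenW\<close>)
      have "phi q (l,j) = u'" "phi q (Suc l,j) = v'" by (metis sl(4) vert(1)) (metis sl(5) vert(2))
      thus ?thesis using connE[OF e] edge_in_V[OF vw e] by blast
    next
      case (bot l')
      define l where "l = (if l' < q then l' else Suc l')"
      have l: "l < length w" "l \<noteq> q" "l' = (if l < q then l else l - 1)"
        using back_letter[of l' w q] bot(4) lenW unfolding l_def by auto
      note sl = shift_letter[OF q l(1,2) l(3)]
      have e: "((l,fst (w!l)),(l,Suc (fst (w!l)))) \<in> ?E" by (rule edge_bot) (use bot sl l in \<open>simp_all\<close>)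
      have "phi q (l,fst (w!l)) = u'" "phi q (l,Suc (fst (w!l))) = v'" by (metis sl(2,4) bot(1)) (metis sl(2,4) bot(2))
      thus ?thesis using connE[OF e] edge_in_V[OF vw e] by blast
    next
      case (top l')
      define l where "l = (if l' < q then l' else Suc l')"
      have l: "l < length w" "l \<noteq> q" "l' = (if l < q then l else l - 1)"
        using back_letter[of l' w q] top(4) lenW unfolding l_def by auto
      note sl = shift_letter[OF q l(1,2) l(3)]
      have e: "((Suc l,fst (w!l)),(Suc l,Suc (fst (w!l)))) \<in> ?E" by (rule edge_top) (use top sl l in \<open>simp_all\<close>)
      have "phi q (Suc l,fst (w!l)) = u'" "phi q (Suc l,Suc (fst (w!l))) = v'" by (metis sl(2,5) top(1)) (metis sl(2,5) top(2))
      thus ?thesis using connE[OF e] edge_in_V[OF vw e] by blast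
    next
      case (clo j)
      have e: "((length w, j),(0,j)) \<in> ?E" by (rule edge_clo) (use clo in simp_all)
      have "phi q (length w, j) = u'" "phi q (0,j) = v'" using clo q lenW by auto
      thus ?thesis using connE[OF e] edge_in_V[OF vw e] by blast
    qed
  next
    fix u v assume u: "u \<in> ?V - {}" and v: "v \<in> ?V - {}" and eq: "phi q u = phi q v"
    from phi_eq_cases[OF eq] show "(u,v) \<in> conn ?E ?V"
    proof (elim disjE exE conjE)
      assume "u = v" thus ?thesis using conn_refl u by simp
    next
      fix j assume uj: "u = (q,j)" and vj: "v = (Suc q, j)"
      have "1 \<le> j" "j \<le> n" using u uj by (auto simp: diagram_vertices_def)
      hence e: "((q,j),(Suc q,j)) \<in> ?E" using edge_vert[OF q, of j n S] qS by simp
      thus ?thesis using conn_edge[OF e] u v uj vj by simp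
    next
      fix j assume uj: "v = (q,j)" and vj: "u = (Suc q, j)"
      have "1 \<le> j" "j \<le> n" using v uj by (auto simp: diagram_vertices_def)
      hence e: "((q,j),(Suc q,j)) \<in> ?E" using edge_vert[OF q, of j n S] qS by simp
      thus ?thesis using conn_edge'[OF e] u v uj vj by simp
    qed
  qed auto
  thus ?thesis by (simp add: loops_conn)
qed

lemma D2:
  assumes vw: "valid n w" and q: "Suc q < length w" and qS: "q \<in> S" "Suc q \<in> S"
    and same: "fst (w ! Suc q) = fst (w ! q)"
  shows "state_loops n w S = state_loops n (delw q w) (dels q S) + 1"
proof -
  let ?V = "diagram_vertices n w" and ?E = "smoothing_edges n w S"
  let ?W = "delw q w" and ?S = "dels q S"
  let ?V' = "diagram_vertices n ?W" and ?E' = "smoothing_edges n ?W ?S"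
  define i where "i = fst (w ! q)"
  define C where "C = {(Suc q, i), (Suc q, Suc i)}"
  have q': "q < length w" using q by simp
  have i1: "1 \<le> i" "i < n" using vw q' unfolding valid_def i_def by auto
  have vW: "valid n ?W" using vw q' unfolding valid_def by (auto simp: delw_nth)
  have lenW: "length ?W = length w - 1" using q' by simp
  have Wq: "?W ! q = w ! Suc q" using q' q by (simp add: delw_nth)
  have CV: "C \<subseteq> ?V" using i1 q by (auto simp: C_def diagram_vertices_def)
  have eC: "((Suc q, i), (Suc q, Suc i)) \<in> ?E" using edge_top[OF qS(1) q'] by (simp add: i_def)
  have "card (?V // conn ?E ?V) = card (?V' // conn ?E' ?V') + (if C = {} then 0 else 1)"
  proof (rule comp_count[where C = C and \<phi> = "phi q"])
    show "finite ?V" by (simp add: diagram_vertices_def)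
    show "?E \<subseteq> ?V \<times> ?V" using edges_in_V[OF vw] .
    show "C \<subseteq> ?V" by (rule CV)
  next
    fix x y assume xy: "(x,y) \<in> ?E"
    thus "x \<in> C \<longleftrightarrow> y \<in> C"
    proof (cases rule: edge_cases)
      case (vert l j)
      have "x \<notin> C"
      proof
        assume "x \<in> C"
        hence "l = Suc q" "j = fst (w!l) \<or> j = Suc (fst (w!l))" using vert same by (auto simp: C_def i_def)
        thus False using vert qS by auto
      qed
      moreover have "y \<notin> C"
      proof
        assume "y \<in> C"
        hence "l = q" "j = fst (w!l) \<or> j = Suc (fst (w!l))" using vert by (auto simp: C_def i_def)
        thus False using vert qS by auto
      qed
      ultimately show ?thesis by simp
    next
      case (bot l) thus ?thesis using same by (auto simp: C_def i_def)
    next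
      case (top l) thus ?thesis by (auto simp: C_def i_def)
    next
      case (clo j) thus ?thesis using q by (auto simp: C_def)
    qed
  next
    fix u v assume "u \<in> C" "v \<in> C"
    thus "(u,v) \<in> conn ?E ?V" using conn_edge[OF eC] conn_edge'[OF eC] conn_refl CV unfolding C_def
      by auto
  next
    show "phi q ` (?V - C) = ?V'"
    proof
      show "phi q ` (?V - C) \<subseteq> ?V'" using phi_image[OF q'] by blast
    next
      show "?V' \<subseteq> phi q ` (?V - C)"
      proof
        fix x assume x: "x \<in> ?V'"
        obtain l j where lj: "x = (l,j)" by (cases x)
        show "x \<in> phi q ` (?V - C)"
        proof (cases "l \<le> q")
          case True
          hence "phi q (l,j) = x" "(l,j) \<in> ?V - C" using x q lj by (auto simp: diagram_vertices_def C_def)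
          thus ?thesis by (metis image_eqI)
        next
          case False
          hence "phi q (Suc l,j) = x" "(Suc l,j) \<in> ?V - C" using x q lj by (auto simp: diagram_vertices_def C_def)
          thus ?thesis by (metis image_eqI)
        qed
      qed
    qed
  next
    fix u v assume uv: "(u,v) \<in> ?E" and uC: "u \<notin> C" and vC: "v \<notin> C"
    have uvV: "u \<in> ?V" "v \<in> ?V" using edge_in_V[OF vw uv] by auto
    have inV': "phi q x \<in> ?V'" if "x \<in> ?V" for x using phi_image[OF q'] imageI[OF that, of "phi q"] by simp
    from uv show "(phi q u, phi q v) \<in> conn ?E' ?V'"
    proof (cases rule: edge_cases)
      case (vert l j)
      show ?thesis
      proof (cases "l = q")
        case True
        hence "phi q u = phi q v" using vert by simp
        thus ?thesis using conn_refl[OF inV'[OF uvV(1)]] by simp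
      next
        case False
        define l' where "l' = (if l < q then l else l - 1)"
        note sl = shift_letter[OF q' vert(3) False l'_def]
        have "((l',j),(Suc l',j)) \<in> ?E'"
          by (rule edge_vert) (use vert sl in \<open>simp_all add: lenW\<close>)
        hence "(phi q u, phi q v) \<in> ?E'" unfolding vert sl(4,5) .
        thus ?thesis using conn_edge[OF _ inV'[OF uvV(1)] inV'[OF uvV(2)]] by simp
      qed
    next
      case (bot l)
      show ?thesis
      proof (cases "l = q")
        case True
        have "((q, fst (?W!q)), (q, Suc (fst (?W!q)))) \<in> ?E'"
          by (rule edge_bot) (use qS q in \<open>simp_all add: lenW\<close>)
        hence "(phi q u, phi q v) \<in> ?E'" using bot True Wq same by simp
        thus ?thesis using conn_edge[OF _ inV'[OF uvV(1)] inV'[OF uvV(2)]] by simp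
      next
        case lq: False
        define l' where "l' = (if l < q then l else l - 1)"
        note sl = shift_letter[OF q' bot(4) lq l'_def]
        have "((l', fst (?W!l')), (l', Suc (fst (?W!l')))) \<in> ?E'"
          by (rule edge_bot) (use sl bot in \<open>simp_all add: lenW\<close>)
        hence "(phi q u, phi q v) \<in> ?E'" unfolding bot sl(4) sl(2) .
        thus ?thesis using conn_edge[OF _ inV'[OF uvV(1)] inV'[OF uvV(2)]] by simp
      qed
    next
      case (top l)
      have lq: "l \<noteq> q" using top uC by (auto simp: C_def i_def)
      define l' where "l' = (if l < q then l else l - 1)"
      note sl = shift_letter[OF q' top(4) lq l'_def]
      have "((Suc l', fst (?W!l')), (Suc l', Suc (fst (?W!l')))) \<in> ?E'"
        by (rule edge_top) (use sl top in \<open>simp_all add: lenW\<close>)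
      hence "(phi q u, phi q v) \<in> ?E'" unfolding top sl(5) sl(2) .
      thus ?thesis using conn_edge[OF _ inV'[OF uvV(1)] inV'[OF uvV(2)]] by simp
    next
      case (clo j)
      have "(phi q u, phi q v) \<in> ?E'"
        using clo q edge_clo[of j n ?W ?S] by (simp add: lenW)
      thus ?thesis using conn_edge[OF _ inV'[OF uvV(1)] inV'[OF uvV(2)]] by simp
    qed
  next
    fix u' v' assume uv': "(u',v') \<in> ?E'"
    have connE: "(u,v) \<in> conn ?E ?V" if "(u,v) \<in> ?E" for u v
      using conn_edge[OF that] edge_in_V[OF vw that] by simp
    from uv' show "\<exists>u v. u \<in> ?V - C \<and> v \<in> ?V - C \<and> phi q u = u' \<and> phi q v = v' \<and> (u, v) \<in> conn ?E ?V"
    proof (cases rule: edge_cases)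
      case (vert l' j)
      define l where "l = (if l' < q then l' else Suc l')"
      have l: "l < length w" "l \<noteq> q" "l' = (if l < q then l else l - 1)"
        using back_letter[of l' w q] vert(3) lenW unfolding l_def by auto
      note sl = shift_letter[OF q' l(1,2) l(3)]
      have e: "((l,j),(Suc l,j)) \<in> ?E" by (rule edge_vert) (use vert sl l in \<open>simp_all add: lenW\<close>)
      have nC: "(l,j) \<notin> C" "(Suc l, j) \<notin> C"
      proof -
        show "(Suc l, j) \<notin> C" using l(2) by (simp add: C_def)
        show "(l,j) \<notin> C"
        proof
          assume "(l,j) \<in> C"
          hence "l = Suc q" "j = i \<or> j = Suc i" by (auto simp: C_def)
          hence "l' = q" using l by simp
          thus False using vert qS \<open>j = i \<or> j = Suc i\<close> Wq same by (auto simp: i_def)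
        qed
      qed
      have "phi q (l,j) = u'" "phi q (Suc l,j) = v'" by (metis sl(4) vert(1)) (metis sl(5) vert(2))
      thus ?thesis using connE[OF e] edge_in_V[OF vw e] nC by blast
    next
      case (bot l')
      show ?thesis
      proof (cases "l' = q")
        case True
        have e: "((q,fst (w!q)),(q,Suc (fst (w!q)))) \<in> ?E" by (rule edge_bot) (use qS q' in simp_all)
        have nC: "(q,fst (w!q)) \<notin> C" "(q,Suc (fst (w!q))) \<notin> C" by (auto simp: C_def)
        have "phi q (q,fst (w!q)) = u'" "phi q (q,Suc (fst (w!q))) = v'" using bot True Wq same by auto
        thus ?thesis using connE[OF e] edge_in_V[OF vw e] nC by blast
      next
        case False
        define l where "l = (if l' < q then l' else Suc l')"
        have l: "l < length w" "l \<noteq> q" "l' = (if l < q then l else l - 1)"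
          using back_letter[of l' w q] bot(4) lenW unfolding l_def by auto
        note sl = shift_letter[OF q' l(1,2) l(3)]
        have e: "((l,fst (w!l)),(l,Suc (fst (w!l)))) \<in> ?E" by (rule edge_bot) (use bot sl l in \<open>simp_all\<close>)
        have "l \<noteq> Suc q" using False l_def by auto
        hence nC: "(l,fst (w!l)) \<notin> C" "(l,Suc (fst (w!l))) \<notin> C" by (auto simp: C_def)
        have "phi q (l,fst (w!l)) = u'" "phi q (l,Suc (fst (w!l))) = v'" by (metis sl(2,4) bot(1)) (metis sl(2,4) bot(2))
        thus ?thesis using connE[OF e] edge_in_V[OF vw e] nC by blast
      qed
    next
      case (top l')
      define l where "l = (if l' < q then l' else Suc l')"
      have l: "l < length w" "l \<noteq> q" "l' = (if l < q then l else l - 1)"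
        using back_letter[of l' w q] top(4) lenW unfolding l_def by auto
      note sl = shift_letter[OF q' l(1,2) l(3)]
      have e: "((Suc l,fst (w!l)),(Suc l,Suc (fst (w!l)))) \<in> ?E" by (rule edge_top) (use top sl l in \<open>simp_all\<close>)
      have nC: "(Suc l,fst (w!l)) \<notin> C" "(Suc l,Suc (fst (w!l))) \<notin> C" using l(2) by (auto simp: C_def)
      have "phi q (Suc l,fst (w!l)) = u'" "phi q (Suc l,Suc (fst (w!l))) = v'" by (metis sl(2,5) top(1)) (metis sl(2,5) top(2))
      thus ?thesis using connE[OF e] edge_in_V[OF vw e] nC by blast
    next
      case (clo j)
      have e: "((length w, j),(0,j)) \<in> ?E" by (rule edge_clo) (use clo in simp_all)
      have nC: "(length w, j) \<notin> C" "(0,j) \<notin> C" using q by (auto simp: C_def)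
      have "phi q (length w, j) = u'" "phi q (0,j) = v'" using clo q lenW by auto
      thus ?thesis using connE[OF e] edge_in_V[OF vw e] nC by blast
    qed
  next
    fix u v assume u: "u \<in> ?V - C" and v: "v \<in> ?V - C" and eq: "phi q u = phi q v"
    from phi_eq_cases[OF eq] show "(u,v) \<in> conn ?E ?V"
    proof (elim disjE exE conjE)
      assume "u = v" thus ?thesis using conn_refl[of u ?V] u by simp
    next
      fix j assume uj: "u = (q,j)" and vj: "v = (Suc q, j)"
      have "1 \<le> j" "j \<le> n" "j \<noteq> i" "j \<noteq> Suc i" using u v uj vj by (auto simp: diagram_vertices_def C_def)
      hence e: "((q,j),(Suc q,j)) \<in> ?E" using edge_vert[OF q', of j n S] by (simp add: i_def)
      thus ?thesis using conn_edge[OF e] u v uj vj by simp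
    next
      fix j assume uj: "v = (q,j)" and vj: "u = (Suc q, j)"
      have "1 \<le> j" "j \<le> n" "j \<noteq> i" "j \<noteq> Suc i" using u v uj vj by (auto simp: diagram_vertices_def C_def)
      hence e: "((q,j),(Suc q,j)) \<in> ?E" using edge_vert[OF q', of j n S] by (simp add: i_def)
      thus ?thesis using conn_edge'[OF e] u v uj vj by simp
    qed
  qed
  thus ?thesis by (simp add: loops_conn C_def)
qed


lemma valid_set: "valid n w \<longleftrightarrow> (\<forall>x\<in>set w. 1 \<le> fst x \<and> fst x < n)"
  by (simp add: valid_def all_set_conv_all_nth)

definition emb :: "nat \<Rightarrow> nat \<Rightarrow> nat set \<Rightarrow> nat set" where
  "emb p m Ou = {l. (l < p \<and> l \<in> Ou) \<or> (p + m \<le> l \<and> l - m \<in> Ou)}"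

lemma emb_mem[simp]: "l \<in> emb p m Ou \<longleftrightarrow> (l < p \<and> l \<in> Ou) \<or> (p + m \<le> l \<and> l - m \<in> Ou)"
  by (simp add: emb_def)

lemma emb0: "emb p 0 Ou = Ou"
  by auto

lemma delw_block:
  assumes "length L = p" "p \<le> q" "q < p + Suc m"
  shows "delw q (L @ replicate (Suc m) c @ R) = L @ replicate m c @ R"
proof (rule nth_equalityI)
  show "length (delw q (L @ replicate (Suc m) c @ R)) = length (L @ replicate m c @ R)"
    using assms by simp
next
  fix l assume "l < length (delw q (L @ replicate (Suc m) c @ R))"
  hence l: "l < p + m + length R" using assms by simp
  show "delw q (L @ replicate (Suc m) c @ R) ! l = (L @ replicate m c @ R) ! l"
    using assms l by (auto simp: delw_nth nth_append nth_Cons')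
qed

lemma dels_emb:
  assumes "p \<le> q" "q < p + Suc m"
  shows "dels q (emb p (Suc m) Ou \<union> T) = emb p m Ou \<union> dels q T"
  using assms by (auto simp: dels_mem split: if_splits)

lemma dels_card:
  assumes "q \<notin> T" "finite T"
  shows "card (dels q T) = card T"
proof -
  have "dels q T = (\<lambda>l. if l < q then l else l - 1) ` T"
  proof
    show "dels q T \<subseteq> (\<lambda>l. if l < q then l else l - 1) ` T"
    proof
      fix l assume "l \<in> dels q T"
      thus "l \<in> (\<lambda>l. if l < q then l else l - 1) ` T"
      proof (cases "l < q")
        case True thus ?thesis using \<open>l \<in> dels q T\<close> by (auto intro: image_eqI[of l _ l])
      next
        case False
        hence "Suc l \<in> T" using \<open>l \<in> dels q T\<close> by simp
        thus ?thesis using False by (auto intro: image_eqI[of l _ "Suc l"])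
      qed
    qed
  next
    show "(\<lambda>l. if l < q then l else l - 1) ` T \<subseteq> dels q T"
    proof (rule image_subsetI)
      fix x assume x: "x \<in> T"
      show "(if x < q then x else x - 1) \<in> dels q T"
      proof (cases "x < q")
        case True thus ?thesis using x by simp
      next
        case False
        hence "x > q" using assms(1) x by (cases "x = q") auto
        hence "\<not> x - 1 < q" "Suc (x - 1) = x" by auto
        thus ?thesis using x False by (simp only: dels_mem if_False)
      qed
    qed
  qed
  moreover have "inj_on (\<lambda>l. if l < q then l else l - 1) T"
  proof (rule inj_onI)
    fix x y assume x: "x \<in> T" and y: "y \<in> T" and eq: "(if x < q then x else x - 1) = (if y < q then y else y - 1)"
    have "x \<noteq> q" "y \<noteq> q" using x y assms(1) by auto
    thus "x = y" using eq by (auto split: if_splits)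
  qed
  ultimately show ?thesis by (metis card_image)
qed

lemma block:
  assumes vL: "valid n L" and vR: "valid n R" and c: "1 \<le> fst c" "fst c < n" and p: "length L = p"
    and T: "T \<subseteq> {p..<p+m}"
  shows "state_loops n (L @ replicate m c @ R) (emb p m Ou \<union> T) =
    (if T = {} then state_loops n (L @ R) Ou else state_loops n (L @ [c] @ R) (emb p 1 Ou \<union> {p}) + card T - 1)"
  using T
proof (induction m arbitrary: T)
  case 0
  hence "T = {}" by auto
  thus ?case by (simp add: emb0)
next
  case (Suc m)
  let ?w = "L @ replicate (Suc m) c @ R" and ?S = "emb p (Suc m) Ou \<union> T"
  have vw: "valid n ?w" using vL vR c by (auto simp: valid_set)
  have finT: "finite T" using Suc.prems finite_subset by blast
  show ?case
  proof (cases "\<exists>q. p \<le> q \<and> q < p + Suc m \<and> q \<notin> T")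
    case True
    then obtain q where q: "p \<le> q" "q < p + Suc m" "q \<notin> T" by blast
    have qlen: "q < length ?w" using q p by simp
    have qS: "q \<notin> ?S" using q by simp
      have dsub: "dels q T \<subseteq> {p..<p + m}"
      proof
        fix l assume l: "l \<in> dels q T"
        show "l \<in> {p..<p + m}"
        proof (cases "l < q")
          case True thus ?thesis using l Suc.prems q by auto
        next
          case False
          hence "Suc l \<in> T" using l by simp
          thus ?thesis using False Suc.prems q by auto
        qed
      qed
    have "state_loops n ?w ?S = state_loops n (delw q ?w) (dels q ?S)" by (rule D1[OF vw qlen qS])
    also have "\<dots> = state_loops n (L @ replicate m c @ R) (emb p m Ou \<union> dels q T)"
      using delw_block[OF p q(1,2)] dels_emb[OF q(1,2)] by simp
    also have "\<dots> = (if dels q T = {} then state_loops n (L @ R) Ou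
        else state_loops n (L @ [c] @ R) (emb p 1 Ou \<union> {p}) + card (dels q T) - 1)"
      by (rule Suc.IH[OF dsub])
    also have "card (dels q T) = card T" by (rule dels_card[OF q(3) finT])
    also have "(dels q T = {}) = (T = {})"
    proof -
      have "finite (dels q T)" using dsub finite_subset by blast
      thus ?thesis using dels_card[OF q(3) finT] finT by (metis card_0_eq)
    qed
    finally show ?thesis .
  next
    case False
    hence Tall: "T = {p..<p + Suc m}" using Suc.prems by force
    show ?thesis
    proof (cases m)
      case 0
      thus ?thesis using Tall by simp
    next
      case (Suc m')
      have q: "Suc p < length ?w" using p Suc by simp
      have pS: "p \<in> ?S" "Suc p \<in> ?S" using Tall Suc by auto
      have same: "fst (?w ! Suc p) = fst (?w ! p)" using p Suc by (simp add: nth_append)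
      have "state_loops n ?w ?S = state_loops n (delw p ?w) (dels p ?S) + 1"
        by (rule D2[OF vw q pS same])
      also have "\<dots> = state_loops n (L @ replicate m c @ R) (emb p m Ou \<union> {p..<p+m}) + 1"
      proof -
        have "dels p T = {p..<p+m}" using Tall by (auto simp: dels_mem split: if_splits)
        thus ?thesis using delw_block[OF p, of p m c R] dels_emb[of p p m Ou T] by simp
      qed
      also have "\<dots> = state_loops n (L @ [c] @ R) (emb p 1 Ou \<union> {p}) + m - 1 + 1"
        using Suc.IH[of "{p..<p+m}"] Suc by simp
      finally show ?thesis using Tall Suc by simp
    qed
  qed
qed


definition unemb :: "nat \<Rightarrow> nat \<Rightarrow> nat set \<Rightarrow> nat set" where
  "unemb p m S = {l. (l < p \<and> l \<in> S) \<or> (p \<le> l \<and> l + m \<in> S)}"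

lemma sum_split_states:
  fixes F :: "nat set \<Rightarrow> 'a::comm_monoid_add"
  shows "(\<Sum>S\<in>Pow {..<p+m+r}. F S) = (\<Sum>Ou\<in>Pow {..<p+r}. \<Sum>T\<in>Pow {p..<p+m}. F (emb p m Ou \<union> T))"
proof -
  let ?g = "\<lambda>(Ou,T). emb p m Ou \<union> T"
  have inj: "inj_on ?g (Pow {..<p+r} \<times> Pow {p..<p+m})"
  proof (rule inj_on_inverseI[where g = "\<lambda>S. (unemb p m S, S \<inter> {p..<p+m})"])
    fix x assume x: "x \<in> Pow {..<p+r} \<times> Pow {p..<p+m}"
    obtain Ou T where xt: "x = (Ou,T)" by (cases x)
    have T: "T \<subseteq> {p..<p+m}" using x xt by auto
    have "unemb p m (emb p m Ou \<union> T) = Ou"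
    proof -
      have "l \<in> unemb p m (emb p m Ou \<union> T) \<longleftrightarrow> l \<in> Ou" for l
        using T by (auto simp: unemb_def)
      thus ?thesis by blast
    qed
    moreover have "(emb p m Ou \<union> T) \<inter> {p..<p+m} = T" using T by auto
    ultimately show "(\<lambda>S. (unemb p m S, S \<inter> {p..<p+m})) (?g x) = x" using xt by simp
  qed
  have img: "?g ` (Pow {..<p+r} \<times> Pow {p..<p+m}) = Pow {..<p+m+r}"
  proof
    show "?g ` (Pow {..<p+r} \<times> Pow {p..<p+m}) \<subseteq> Pow {..<p+m+r}"
    proof (rule image_subsetI)
      fix x assume "x \<in> Pow {..<p+r} \<times> Pow {p..<p+m}"
      then obtain Ou T where "x = (Ou,T)" "Ou \<subseteq> {..<p+r}" "T \<subseteq> {p..<p+m}" by auto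
      moreover have "l < p + m + r" if "Ou \<subseteq> {..<p+r}" "p + m \<le> l" "l - m \<in> Ou" for l
        using that by force
      ultimately show "?g x \<in> Pow {..<p+m+r}" by auto
    qed
  next
    show "Pow {..<p+m+r} \<subseteq> ?g ` (Pow {..<p+r} \<times> Pow {p..<p+m})"
    proof
      fix S assume S: "S \<in> Pow {..<p+m+r}"
      have "S = ?g (unemb p m S, S \<inter> {p..<p+m})"
      proof -
        have "l \<in> S \<longleftrightarrow> l \<in> ?g (unemb p m S, S \<inter> {p..<p+m})" for l
          by (auto simp: unemb_def)
        thus ?thesis by blast
      qed
      moreover have "(unemb p m S, S \<inter> {p..<p+m}) \<in> Pow {..<p+r} \<times> Pow {p..<p+m}"
        using S by (auto simp: unemb_def)
      ultimately show "S \<in> ?g ` (Pow {..<p+r} \<times> Pow {p..<p+m})" by (rule image_eqI)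
    qed
  qed
  have "(\<Sum>S\<in>Pow {..<p+m+r}. F S) = (\<Sum>x\<in>Pow {..<p+r} \<times> Pow {p..<p+m}. F (?g x))"
    using sum.reindex[OF inj, of F] img by simp
  also have "\<dots> = (\<Sum>Ou\<in>Pow {..<p+r}. \<Sum>T\<in>Pow {p..<p+m}. F (emb p m Ou \<union> T))"
    by (simp add: sum.cartesian_product case_prod_beta)
  finally show ?thesis .
qed

lemma card_sum: "card {l. l < (N::nat) \<and> P l} = (\<Sum>l<N. if P l then 1 else 0)"
proof -
  have "card {l. l < N \<and> P l} = card {l \<in> {..<N}. P l}" by (rule arg_cong[where f = card]) auto
  also have "\<dots> = (\<Sum>l\<in>{l \<in> {..<N}. P l}. 1)" by simp
  also have "\<dots> = (\<Sum>l<N. if P l then 1 else 0)" by (rule sum.inter_filter) simp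
  finally show ?thesis .
qed

lemma sum_if_card: "finite A \<Longrightarrow> (\<Sum>x\<in>A. if P x then (1::nat) else 0) = card {x\<in>A. P x}"
  by (simp add: sum.inter_filter[symmetric])

lemma sum3:
  fixes f :: "nat \<Rightarrow> 'a::comm_monoid_add"
  shows "(\<Sum>l<p+m+r. f l) = (\<Sum>l<p. f l) + (\<Sum>l\<in>{p..<p+m}. f l) + (\<Sum>l\<in>{p..<p+r}. f (l+m))"
proof -
  have "(\<Sum>l<p+m+r. f l) = (\<Sum>l\<in>{0..<p+m+r}. f l)" by (simp add: lessThan_atLeast0)
  also have "\<dots> = (\<Sum>l\<in>{0..<p}. f l) + (\<Sum>l\<in>{p..<p+m+r}. f l)"
    by (rule sum.atLeastLessThan_concat[symmetric]) auto
  also have "(\<Sum>l\<in>{p..<p+m+r}. f l) = (\<Sum>l\<in>{p..<p+m}. f l) + (\<Sum>l\<in>{p+m..<p+m+r}. f l)"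
    by (rule sum.atLeastLessThan_concat[symmetric]) auto
  also have "(\<Sum>l\<in>{p+m..<p+m+r}. f l) = (\<Sum>l\<in>{p..<p+r}. f (l+m))"
    using sum.shift_bounds_nat_ivl[of f p m "p+r"] by (simp add: add.commute add.left_commute)
  finally show ?thesis by (simp add: lessThan_atLeast0 add.assoc)
qed

lemma sum2:
  fixes f :: "nat \<Rightarrow> 'a::comm_monoid_add"
  shows "(\<Sum>l<p+r. f l) = (\<Sum>l<p. f l) + (\<Sum>l\<in>{p..<p+r}. f l)"
  using sum3[of f p 0 r] by simp

lemma writhe_block: "writhe (L @ replicate m c @ R) = writhe (L @ R) + int m * crossing_sign c"
  by (simp add: writhe_def sum_list_replicate)

lemma A_count_split:
  assumes p: "length L = p" and r: "length R = r" and T: "T \<subseteq> {p..<p+m}"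
  shows "A_count (L @ replicate m c @ R) (emb p m Ou \<union> T) =
    A_count (L @ R) Ou + (if crossing_sign c = 1 then m - card T else card T)"
proof -
  let ?w = "L @ replicate m c @ R" and ?S = "emb p m Ou \<union> T"
  define g where "g l = (if (l \<notin> ?S) = (crossing_sign (?w ! l) = 1) then 1 else (0::nat))" for l
  define g0 where "g0 l = (if (l \<notin> Ou) = (crossing_sign ((L @ R) ! l) = 1) then 1 else (0::nat))" for l
  have A: "A_count ?w ?S = (\<Sum>l<p+m+r. g l)"
    unfolding A_count_def g_def card_sum using p r by (simp add: add.assoc)
  have A0: "A_count (L @ R) Ou = (\<Sum>l<p+r. g0 l)"
    unfolding A_count_def g0_def card_sum using p r by simp
  have s1: "(\<Sum>l<p. g l) = (\<Sum>l<p. g0 l)"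
  proof (rule sum.cong)
    fix l assume l: "l \<in> {..<p}"
    have "l \<notin> T" using T l by auto
    thus "g l = g0 l" using l p by (simp add: g_def g0_def nth_append)
  qed simp
  have s3: "(\<Sum>l\<in>{p..<p+r}. g (l+m)) = (\<Sum>l\<in>{p..<p+r}. g0 l)"
  proof (rule sum.cong)
    fix l assume l: "l \<in> {p..<p+r}"
    have "l + m \<notin> T" using T l by auto
    moreover have "(L @ replicate m c @ R) ! (l + m) = (L @ R) ! l" using l p by (auto simp: nth_append)
    ultimately show "g (l+m) = g0 l" using l p by (simp add: g_def g0_def)
  qed simp
  have s2: "(\<Sum>l\<in>{p..<p+m}. g l) = (if crossing_sign c = 1 then m - card T else card T)"
  proof -
    have gl: "g l = (if (l \<notin> T) = (crossing_sign c = 1) then 1 else 0)" if "l \<in> {p..<p+m}" for l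
    proof -
      have "?w ! l = c" using that p by (auto simp: nth_append)
      moreover have "(l \<in> ?S) = (l \<in> T)" using that by auto
      ultimately show ?thesis by (simp add: g_def)
    qed
    have "(\<Sum>l\<in>{p..<p+m}. g l) = (\<Sum>l\<in>{p..<p+m}. if (l \<notin> T) = (crossing_sign c = 1) then 1 else 0)"
      using gl by (rule sum.cong[OF refl])
    also have "\<dots> = card {l\<in>{p..<p+m}. (l \<notin> T) = (crossing_sign c = 1)}" by (rule sum_if_card) simp
    also have "\<dots> = (if crossing_sign c = 1 then m - card T else card T)"
    proof (cases "crossing_sign c = 1")
      case True
      have "{l\<in>{p..<p+m}. (l \<notin> T) = (crossing_sign c = 1)} = {p..<p+m} - T" using True by auto
      thus ?thesis using True T by (simp add: card_Diff_subset finite_subset)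
    next
      case False
      have "{l\<in>{p..<p+m}. (l \<notin> T) = (crossing_sign c = 1)} = T" using False T by auto
      thus ?thesis using False by simp
    qed
    finally show ?thesis .
  qed
  have "A_count ?w ?S = (\<Sum>l<p. g0 l) + (if crossing_sign c = 1 then m - card T else card T) + (\<Sum>l\<in>{p..<p+r}. g0 l)"
    unfolding A sum3 s1 s2 s3 ..
  moreover have "A_count (L @ R) Ou = (\<Sum>l<p. g0 l) + (\<Sum>l\<in>{p..<p+r}. g0 l)"
    unfolding A0 sum2 ..
  ultimately show ?thesis by simp
qed


unbundle fps_syntax

abbreviation Xp :: "int \<Rightarrow> int fls" where "Xp i \<equiv> fls_X_intpow i"

definition dl :: "int fls" where "dl = - (Xp 1 + Xp (-1))"

lemma dl_eq: "- (fls_X + fls_X_inv) = dl"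
  by (simp add: dl_def fls_X_conv_shift_1 fls_X_inv_conv_shift_1)

definition sg :: "int \<Rightarrow> int fls" where "sg z = fls_const ((-1) ^ nat \<bar>z\<bar>)"

lemma neg1_pow: "(-1::int) ^ nat \<bar>z\<bar> = (if even z then 1 else -1)"
  by (simp add: even_nat_iff)

lemma sg_add: "sg (a + b) = sg a * sg b"
  by (simp add: sg_def neg1_pow)

lemma sg_minus: "sg (- a) = sg a"
  by (simp add: sg_def)

lemma sg_diff: "sg (a - b) = sg a * sg b"
  using sg_add[of a "-b"] by (simp add: sg_minus)

lemma sg_sq: "sg a * sg a = 1"
  by (simp add: sg_def neg1_pow)

lemma Xp_mult: "Xp a * Xp b = Xp (a + b)"
  by (rule fls_X_intpow_times_fls_X_intpow)

lemma Xp_nth: "Xp a $$ k = (if k = a then 1 else 0)"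
  by simp

lemma Xp_times_nth: "(Xp a * f) $$ k = f $$ (k - a)"
  by (simp add: fls_X_intpow_times_conv_shift)

lemma Xp0: "Xp 0 = 1" by simp

definition ub :: "int fls \<Rightarrow> bool" where "ub f \<longleftrightarrow> (\<exists>N. \<forall>k\<ge>N. f $$ k = 0)"

lemma ub_add: "ub f \<Longrightarrow> ub g \<Longrightarrow> ub (f + g)"
proof -
  assume "ub f" "ub g"
  then obtain N M where N: "\<forall>k\<ge>N. f $$ k = 0" and M: "\<forall>k\<ge>M. g $$ k = 0" unfolding ub_def by blast
  hence "\<forall>k\<ge>max N M. (f + g) $$ k = 0" by simp
  thus "ub (f + g)" unfolding ub_def by blast
qed

lemma ub_uminus: "ub f \<Longrightarrow> ub (- f)"
  unfolding ub_def by auto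

lemma ub_Xp: "ub f \<Longrightarrow> ub (Xp a * f)"
  unfolding ub_def Xp_times_nth
proof -
  assume "\<exists>N. \<forall>k\<ge>N. f $$ k = 0"
  then obtain N where N: "\<forall>k\<ge>N. f $$ k = 0" by blast
  hence "\<forall>k\<ge>N + a. f $$ (k - a) = 0" by auto
  thus "\<exists>N. \<forall>k\<ge>N. f $$ (k - a) = 0" by blast
qed

lemma ub_const: "ub f \<Longrightarrow> ub (fls_const c * f)"
  unfolding ub_def by auto

lemma ub_one: "ub 1"
  unfolding ub_def by (rule exI[of _ 1]) auto

lemma dl_mult: "dl * f = - (Xp 1 * f + Xp (-1) * f)"
  unfolding dl_def by (simp only: mult_minus_left distrib_right)

lemma ub_dl_pow: "ub (dl ^ n)"
proof (induction n)
  case 0 then show ?case by (simp add: ub_one)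
next
  case (Suc n)
  have eq: "dl ^ Suc n = - (Xp 1 * dl ^ n + Xp (-1) * dl ^ n)"
    by (simp only: power_Suc dl_mult)
  show ?case unfolding eq by (intro ub_uminus ub_add ub_Xp Suc)
qed

lemma ub_sum: "finite A \<Longrightarrow> (\<And>x. x \<in> A \<Longrightarrow> ub (f x)) \<Longrightarrow> ub (\<Sum>x\<in>A. f x)"
proof (induction A rule: finite_induct)
  case empty then show ?case by (simp add: ub_def)
next
  case (insert x F) then show ?case by (simp add: ub_add)
qed

lemma sum_pow_card:
  fixes z :: "'a::comm_semiring_1"
  assumes "finite B"
  shows "(\<Sum>T\<in>Pow B. z ^ card T) = (1 + z) ^ card B"
  using assms
proof (induction B rule: finite_induct)
  case empty then show ?case by simp
next
  case (insert x B)
  have pw: "Pow (insert x B) = Pow B \<union> insert x ` Pow B" by (rule Pow_insert)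
  have disj: "Pow B \<inter> insert x ` Pow B = {}" using insert by auto
  have inj: "inj_on (insert x) (Pow B)" using insert by (auto simp: inj_on_def)
  have fin: "finite (Pow B)" "finite (insert x ` Pow B)" using insert by auto
  have "(\<Sum>T\<in>Pow (insert x B). z ^ card T) = (\<Sum>T\<in>Pow B. z ^ card T) + (\<Sum>T\<in>insert x ` Pow B. z ^ card T)"
    unfolding pw by (rule sum.union_disjoint[OF fin disj])
  also have "(\<Sum>T\<in>insert x ` Pow B. z ^ card T) = (\<Sum>T\<in>Pow B. z ^ card (insert x T))"
    by (rule sum.reindex[OF inj, unfolded comp_def])
  also have "\<dots> = (\<Sum>T\<in>Pow B. z * z ^ card T)"
  proof (rule sum.cong[OF refl])
    fix T assume "T \<in> Pow B"
    hence "x \<notin> T" "finite T" using insert finite_subset by auto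
    thus "z ^ card (insert x T) = z * z ^ card T" by simp
  qed
  also have "\<dots> = z * (1 + z) ^ card B" using insert.IH by (simp add: sum_distrib_left[symmetric])
  finally show ?case using insert by (simp add: algebra_simps)
qed

lemma sum_pow_card_ne:
  fixes z :: "'a::comm_ring_1"
  assumes "finite B"
  shows "(\<Sum>T\<in>Pow B. if T = {} then a else b * z ^ card T) = a + b * ((1 + z) ^ card B - 1)"
proof -
  have "(\<Sum>T\<in>Pow B. if T = {} then a else b * z ^ card T) =
      (\<Sum>T\<in>Pow B. b * z ^ card T + (if T = {} then a - b else 0))"
    by (rule sum.cong) auto
  also have "\<dots> = b * (\<Sum>T\<in>Pow B. z ^ card T) + (\<Sum>T\<in>Pow B. if T = {} then a - b else 0)"
    by (simp add: sum.distrib sum_distrib_left)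
  also have "(\<Sum>T\<in>Pow B. if T = {} then a - b else 0) = a - b"
    using assms by (simp add: sum.delta')
  also have "(\<Sum>T\<in>Pow B. z ^ card T) = (1 + z) ^ card B" by (rule sum_pow_card[OF assms])
  finally show ?thesis by (simp add: algebra_simps)
qed


unbundle fps_syntax

lemma edges_fst:
  assumes "length w = length w'" "\<forall>l<length w. fst (w!l) = fst (w'!l)"
  shows "smoothing_edges n w S = smoothing_edges n w' S"
  using assms unfolding smoothing_edges_def by (auto; metis)

lemma loops_fst:
  assumes "length w = length w'" "\<forall>l<length w. fst (w!l) = fst (w'!l)"
  shows "state_loops n w S = state_loops n w' S"
  using edges_fst[OF assms] assms(1) by (simp add: state_loops_def diagram_vertices_def)

lemma loops_pos:
  assumes "1 \<le> n"
  shows "1 \<le> state_loops n w S"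
proof -
  let ?V = "diagram_vertices n w" and ?R = "conn (smoothing_edges n w S) (diagram_vertices n w)"
  have "(0,1) \<in> ?V" using assms by (simp add: diagram_vertices_def)
  hence "?R``{(0,1)} \<in> ?V // ?R" by (rule quotientI)
  moreover have "finite (?V // ?R)"
    by (rule finite_quotient) (auto simp: diagram_vertices_def conn_def)
  ultimately have "card (?V // ?R) \<noteq> 0" by auto
  thus ?thesis by (simp add: loops_conn)
qed

lemma A_count_le: "A_count w S \<le> length w"
proof -
  have "A_count w S \<le> card {..<length w}" unfolding A_count_def by (rule card_mono) auto
  thus ?thesis by simp
qed

definition tm :: "nat \<Rightarrow> letter list \<Rightarrow> nat set \<Rightarrow> int fls" where
  "tm n w S = fls_const ((-1) ^ nat \<bar>writhe w\<bar>)
      * fls_X_intpow ((int (A_count w S) - int (B_count w S) - 3 * writhe w) div 2)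
      * (- (fls_X + fls_X_inv)) ^ (state_loops n w S - 1)"

lemma jones_tm: "jones n w = (\<Sum>S\<in>Pow {..<length w}. tm n w S)"
  by (simp add: jones_def tm_def)

definition K0 :: "letter list \<Rightarrow> nat set \<Rightarrow> int fls" where
  "K0 w Ou = sg (writhe w) * Xp ((int (A_count w Ou) - int (B_count w Ou) - 3 * writhe w) div 2)"

definition lp :: "nat \<Rightarrow> letter list \<Rightarrow> nat \<Rightarrow> letter list \<Rightarrow> nat set \<Rightarrow> nat" where
  "lp n L i R Ou = state_loops n (L @ [(i,True)] @ R) (emb (length L) 1 Ou \<union> {length L})"

lemma term_formula:
  fixes e :: int
  assumes vL: "valid n L" and vR: "valid n R" and i: "1 \<le> i" "i < n"
    and p: "length L = p" and m: "m = nat \<bar>e\<bar>" and T: "T \<subseteq> {p..<p+m}"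
  shows "tm n (L @ replicate m (i, 0 \<le> e) @ R) (emb p m Ou \<union> T) =
    K0 (L @ R) Ou * (sg e * Xp e) * (Xp ((if 0 \<le> e then 1 else -1) * int (card T)) *
      dl ^ ((if T = {} then state_loops n (L @ R) Ou else lp n L i R Ou + card T - 1) - 1))"
proof -
  let ?c = "(i, 0 \<le> e)"
  let ?w = "L @ replicate m ?c @ R" and ?S = "emb p m Ou \<union> T"
  let ?t = "card T"
  define wr0 where "wr0 = writhe (L @ R)"
  define A0 where "A0 = A_count (L @ R) Ou"
  define X where "X = int A0 - int (B_count (L @ R) Ou) - 3 * wr0"
  define s where "s = (if 0 \<le> e then 1 else -1 :: int)"
  have tm_le: "?t \<le> m"
  proof -
    have "?t \<le> card {p..<p+m}" using T by (rule card_mono[rotated]) simp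
    thus ?thesis by simp
  qed
  have cs: "crossing_sign ?c = (if 0 \<le> e then -1 else 1)" by (simp add: crossing_sign_def)
  have wr: "writhe ?w = wr0 - e" unfolding wr0_def writhe_block cs using m by auto
  have A: "A_count ?w ?S = A0 + (if 0 \<le> e then ?t else m - ?t)"
    unfolding A0_def A_count_split[OF p refl T] cs by simp
  have lenw: "length ?w = length (L @ R) + m" by simp
  have A0le: "A0 \<le> length (L @ R)" unfolding A0_def by (rule A_count_le)
  have Ale: "A_count ?w ?S \<le> length ?w" by (rule A_count_le)
  have B: "int (B_count ?w ?S) = int (length (L @ R)) + int m - int (A_count ?w ?S)"
    unfolding B_count_def using Ale lenw by simp
  have B0: "int (B_count (L @ R) Ou) = int (length (L @ R)) - int A0"
    unfolding B_count_def A0_def using A0le A0_def by simp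
  have expo: "int (A_count ?w ?S) - int (B_count ?w ?S) - 3 * writhe ?w = X + 2 * (e + s * int ?t)"
  proof (cases "0 \<le> e")
    case True
    hence "int m = e" using m by simp
    thus ?thesis unfolding B wr A X_def B0 s_def using True by simp
  next
    case False
    hence "int m = - e" using m by simp
    thus ?thesis unfolding B wr A X_def B0 s_def using False tm_le by (simp add: of_nat_diff)
  qed
  have expo2: "(int (A_count ?w ?S) - int (B_count ?w ?S) - 3 * writhe ?w) div 2 = X div 2 + e + s * int ?t"
    unfolding expo by simp
  have sign: "fls_const ((-1) ^ nat \<bar>writhe ?w\<bar>) = sg wr0 * sg e"
    using sg_diff[of wr0 e] unfolding wr sg_def .
  have loops: "state_loops n ?w ?S = (if T = {} then state_loops n (L @ R) Ou else lp n L i R Ou + ?t - 1)"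
  proof -
    have "state_loops n ?w ?S = (if T = {} then state_loops n (L @ R) Ou
        else state_loops n (L @ [?c] @ R) (emb p 1 Ou \<union> {p}) + ?t - 1)"
      by (rule block[OF vL vR _ _ p T]) (use i in auto)
    moreover have "state_loops n (L @ [?c] @ R) (emb p 1 Ou \<union> {p}) = lp n L i R Ou"
      unfolding lp_def p[symmetric] by (rule loops_fst) (auto simp: nth_append nth_Cons')
    ultimately show ?thesis by simp
  qed
  have "tm n ?w ?S = (sg wr0 * sg e) * Xp (X div 2 + e + s * int ?t) * dl ^ (state_loops n ?w ?S - 1)"
    unfolding tm_def sign expo2 dl_eq ..
  also have "Xp (X div 2 + e + s * int ?t) = Xp (X div 2) * Xp e * Xp (s * int ?t)"
    by (simp only: Xp_mult)
  finally show ?thesis unfolding loops K0_def wr0_def[symmetric] A0_def[symmetric] X_def[symmetric] s_def[symmetric]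
    by (simp add: ac_simps)
qed

lemma sg_pow: "sg e = (-1) ^ nat \<bar>e\<bar>"
  by (simp add: sg_def fls_const_power)

lemma one_plus_z:
  fixes s :: int
  assumes "s = 1 \<or> s = -1"
  shows "1 + Xp s * dl = - Xp (2 * s)"
proof -
  have "Xp s * dl = - (Xp (1 + s) + Xp (s - 1))"
    by (simp only: mult.commute[of "Xp s"] dl_mult Xp_mult) (simp add: algebra_simps)
  thus ?thesis using assms by auto
qed

lemma inner:
  fixes e :: int and Ou :: "nat set"
  assumes vL: "valid n L" and vR: "valid n R" and i: "1 \<le> i" "i < n"
    and p: "length L = p" and m: "m = nat \<bar>e\<bar>"
  defines "l0 \<equiv> state_loops n (L @ R) Ou" and "l1 \<equiv> lp n L i R Ou"
  shows "dl * (\<Sum>T\<in>Pow {p..<p+m}. tm n (L @ replicate m (i, 0 \<le> e) @ R) (emb p m Ou \<union> T)) =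
    sg e * Xp e * (K0 (L @ R) Ou * (dl ^ l0 - dl ^ (l1 - 1))) + Xp (3 * e) * (K0 (L @ R) Ou * dl ^ (l1 - 1))"
proof -
  define s where "s = (if 0 \<le> e then 1 else -1 :: int)"
  define K where "K = K0 (L @ R) Ou * (sg e * Xp e)"
  define z where "z = Xp s * dl"
  have n1: "1 \<le> n" using i by simp
  have l0: "1 \<le> l0" unfolding l0_def by (rule loops_pos[OF n1])
  have l1: "1 \<le> l1" unfolding l1_def lp_def by (rule loops_pos[OF n1])
  define h where "h (T::nat set) = Xp (s * int (card T)) * dl ^ ((if T = {} then l0 else l1 + card T - 1) - 1)" for T
  have "(\<Sum>T\<in>Pow {p..<p+m}. tm n (L @ replicate m (i, 0 \<le> e) @ R) (emb p m Ou \<union> T)) =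
      (\<Sum>T\<in>Pow {p..<p+m}. K * h T)"
  proof (rule sum.cong[OF refl])
    fix T assume "T \<in> Pow {p..<p+m}"
    hence T: "T \<subseteq> {p..<p+m}" by simp
    show "tm n (L @ replicate m (i, 0 \<le> e) @ R) (emb p m Ou \<union> T) = K * h T"
      unfolding term_formula[OF vL vR i p m T] K_def h_def s_def l0_def l1_def ..
  qed
  also have "\<dots> = K * (\<Sum>T\<in>Pow {p..<p+m}. h T)" by (simp add: sum_distrib_left)
  finally have eq1: "(\<Sum>T\<in>Pow {p..<p+m}. tm n (L @ replicate m (i, 0 \<le> e) @ R) (emb p m Ou \<union> T)) =
      K * (\<Sum>T\<in>Pow {p..<p+m}. h T)" .
  have dh: "dl * h T = (if T = {} then dl ^ l0 else dl ^ (l1 - 1) * z ^ card T)" if T: "T \<subseteq> {p..<p+m}" for T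
  proof (cases "T = {}")
    case True
    have "dl * dl ^ (l0 - 1) = dl ^ l0" using l0 by (simp add: power_Suc[symmetric])
    thus ?thesis using True by (simp add: h_def)
  next
    case False
    have "finite T" using T finite_subset by blast
    hence t: "1 \<le> card T" using False by (simp add: Suc_le_eq card_gt_0_iff)
    have e1: "Suc (l1 + card T - 1 - 1) = (l1 - 1) + card T" using t l1 by simp
    have "dl * h T = Xp (s * int (card T)) * dl ^ Suc (l1 + card T - 1 - 1)"
      using False by (simp add: h_def)
    also have "\<dots> = dl ^ (l1 - 1) * (Xp s ^ card T * dl ^ card T)"
      unfolding e1 power_add fls_X_intpow_power by (simp add: ac_simps)
    also have "\<dots> = dl ^ (l1 - 1) * z ^ card T" by (simp add: z_def power_mult_distrib)
    finally show ?thesis using False by simp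
  qed
  have "dl * (\<Sum>T\<in>Pow {p..<p+m}. h T) = (\<Sum>T\<in>Pow {p..<p+m}. dl * h T)"
    by (rule sum_distrib_left)
  also have "\<dots> = (\<Sum>T\<in>Pow {p..<p+m}. if T = {} then dl ^ l0 else dl ^ (l1 - 1) * z ^ card T)"
  proof (rule sum.cong[OF refl])
    fix T assume "T \<in> Pow {p..<p+m}"
    thus "dl * h T = (if T = {} then dl ^ l0 else dl ^ (l1 - 1) * z ^ card T)" using dh by blast
  qed
  also have "\<dots> = dl ^ l0 + dl ^ (l1 - 1) * ((1 + z) ^ m - 1)"
    using sum_pow_card_ne[of "{p..<p+m}" "dl ^ l0" "dl ^ (l1 - 1)" z] by simp
  also have "(1 + z) ^ m = sg e * Xp (2 * e)"
  proof -
    have pz: "(1 + z) = - Xp (2 * s)" unfolding z_def by (rule one_plus_z) (simp add: s_def)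
    have "(1 + z) ^ m = (-1) ^ m * Xp (2 * s) ^ m" unfolding pz by (rule power_minus)
    also have "Xp (2 * s) ^ m = Xp (int m * (2 * s))" by (rule fls_X_intpow_power)
    also have "int m * (2 * s) = 2 * e" using m by (simp add: s_def)
    also have "(-1) ^ m = sg e" using m sg_pow by simp
    finally show ?thesis .
  qed
  finally have eq2: "dl * (\<Sum>T\<in>Pow {p..<p+m}. h T) = dl ^ l0 + dl ^ (l1 - 1) * (sg e * Xp (2 * e) - 1)" .
  have "dl * (\<Sum>T\<in>Pow {p..<p+m}. tm n (L @ replicate m (i, 0 \<le> e) @ R) (emb p m Ou \<union> T)) =
      K * (dl ^ l0 + dl ^ (l1 - 1) * (sg e * Xp (2 * e) - 1))"
    unfolding eq1 eq2[symmetric] by (simp add: ac_simps)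
  also have "\<dots> = sg e * Xp e * (K0 (L @ R) Ou * (dl ^ l0 - dl ^ (l1 - 1)))
      + (sg e * sg e) * (Xp e * Xp (2 * e)) * (K0 (L @ R) Ou * dl ^ (l1 - 1))"
    unfolding K_def by (simp add: algebra_simps)
  also have "(sg e * sg e) * (Xp e * Xp (2 * e)) = Xp (3 * e)"
    unfolding sg_sq Xp_mult by simp
  finally show ?thesis .
qed

lemma V_formula:
  fixes e :: int
  assumes vL: "valid n L" and vR: "valid n R" and i: "1 \<le> i" "i < n"
  defines "P \<equiv> (\<Sum>Ou\<in>Pow {..<length L + length R}. K0 (L @ R) Ou *
      (dl ^ state_loops n (L @ R) Ou - dl ^ (lp n L i R Ou - 1)))"
    and "Q \<equiv> (\<Sum>Ou\<in>Pow {..<length L + length R}. K0 (L @ R) Ou * dl ^ (lp n L i R Ou - 1))"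
  shows "dl * jones n (L @ replicate (nat \<bar>e\<bar>) (i, 0 \<le> e) @ R) = sg e * Xp e * P + Xp (3 * e) * Q"
proof -
  let ?p = "length L" and ?r = "length R" and ?m = "nat \<bar>e\<bar>"
  let ?w = "L @ replicate ?m (i, 0 \<le> e) @ R"
  have len: "length ?w = ?p + ?m + ?r" by simp
  have "dl * jones n ?w = dl * (\<Sum>Ou\<in>Pow {..<?p+?r}. \<Sum>T\<in>Pow {?p..<?p+?m}. tm n ?w (emb ?p ?m Ou \<union> T))"
    unfolding jones_tm len sum_split_states ..
  also have "\<dots> = (\<Sum>Ou\<in>Pow {..<?p+?r}. dl * (\<Sum>T\<in>Pow {?p..<?p+?m}. tm n ?w (emb ?p ?m Ou \<union> T)))"
    by (rule sum_distrib_left)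
  also have "\<dots> = (\<Sum>Ou\<in>Pow {..<?p+?r}. sg e * Xp e * (K0 (L @ R) Ou *
      (dl ^ state_loops n (L @ R) Ou - dl ^ (lp n L i R Ou - 1))) + Xp (3 * e) * (K0 (L @ R) Ou * dl ^ (lp n L i R Ou - 1)))"
    by (rule sum.cong[OF refl]) (rule inner[OF vL vR i refl refl])
  also have "\<dots> = sg e * Xp e * P + Xp (3 * e) * Q"
    unfolding P_def Q_def sum.distrib sum_distrib_left ..
  finally show ?thesis .
qed

lemma ub_Q: "ub (\<Sum>Ou\<in>Pow {..<N}. K0 w Ou * dl ^ (f Ou))"
proof (rule ub_sum)
  fix Ou
  show "ub (K0 w Ou * dl ^ f Ou)"
    unfolding K0_def sg_def mult.assoc by (intro ub_const ub_Xp ub_dl_pow)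
qed simp


unbundle fps_syntax

lemma dl_nth: "dl $$ k = (if k = 1 \<or> k = -1 then -1 else 0)"
  by (auto simp: dl_def)

lemma shift_one_times: "fls_shift k (1::int fls) * f = fls_shift k f"
  using fls_X_intpow_times_conv_shift(1)[of "-k" f] by simp

lemma dl_nth0: "k \<noteq> 1 \<Longrightarrow> k \<noteq> -1 \<Longrightarrow> dl $$ k = 0"
  by (simp add: dl_nth)

lemma t1: "Xp 3 + Xp 1 = dl * (- Xp 2)"
  by (simp add: fls_eq_iff dl_mult shift_one_times)

lemma t2: "Xp 6 - Xp 2 = dl * (- (Xp 3 * (Xp 2 - 1)))"
  by (simp add: fls_eq_iff dl_mult shift_one_times algebra_simps)

lemma no_gap:
  assumes ubv: "ub v" and d: "d \<ge> 3"
    and eq: "v * (Xp (3*d) - sg d * Xp d) = dl * (1 - sg d * Xp d)"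
  shows False
proof -
  define c :: int where "c = (-1) ^ nat \<bar>d\<bar>"
  have c: "c = 1 \<or> c = -1" unfolding c_def neg1_pow by simp
  have cc: "c * c = 1" using c by auto
  define g where "g j = v $$ j" for j
  have lhs: "v * (Xp (3*d) - sg d * Xp d) = fls_shift (-(3*d)) v - fls_const c * fls_shift (-d) v"
  proof -
    have "v * (Xp (3*d) - sg d * Xp d) = v * Xp (3*d) - sg d * (v * Xp d)"
      by (simp only: right_diff_distrib mult.left_commute[of v "sg d"])
    also have "v * Xp (3*d) = fls_shift (-(3*d)) v" by (rule fls_X_intpow_times_conv_shift(2))
    also have "v * Xp d = fls_shift (-d) v" by (rule fls_X_intpow_times_conv_shift(2))
    finally show ?thesis by (simp only: sg_def c_def)
  qed
  have rhs: "dl * (1 - sg d * Xp d) = dl - fls_const c * fls_shift (-d) dl"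
  proof -
    have "dl * (1 - sg d * Xp d) = dl - sg d * (dl * Xp d)"
      by (simp only: right_diff_distrib mult.left_commute[of dl "sg d"] mult_1_right)
    also have "dl * Xp d = fls_shift (-d) dl" by (rule fls_X_intpow_times_conv_shift(2))
    finally show ?thesis by (simp only: sg_def c_def)
  qed
  have rec: "g (k - 3*d) - c * g (k - d) = dl $$ k - c * dl $$ (k - d)" for k
  proof -
    have "(fls_shift (-(3*d)) v - fls_const c * fls_shift (-d) v) $$ k = (dl - fls_const c * fls_shift (-d) dl) $$ k"
      using eq unfolding lhs rhs by simp
    thus ?thesis by (simp add: g_def)
  qed
  obtain M where M: "\<forall>j<M. g j = 0" using fls_eq0_below_subdegree unfolding g_def by blast
  have stepA: "g (1 - 2*d*int t) = c * g (1 - 2*d*int (Suc t))" if t: "t \<ge> 1" for t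
  proof -
    have "g (1 - 2*d*int (Suc t)) - c * g (1 - 2*d*int t) = dl $$ (1 - 2*d*int t + d) - c * dl $$ (1 - 2*d*int t)"
      using rec[of "1 - 2*d*int t + d"] by (simp add: algebra_simps)
    also have "dl $$ (1 - 2*d*int t + d) = 0"
    proof -
      have "d * int t \<ge> d" using t d by simp
      hence "1 - 2*d*int t + d \<le> -2" using d by linarith
      thus ?thesis by - (rule dl_nth0; linarith)
    qed
    also have "dl $$ (1 - 2*d*int t) = 0"
    proof -
      have "d * int t \<ge> d" using t d by simp
      hence "1 - 2*d*int t \<le> -2" using d by linarith
      thus ?thesis by - (rule dl_nth0; linarith)
    qed
    finally have "g (1 - 2*d*int (Suc t)) = c * g (1 - 2*d*int t)" by simp
    hence "c * g (1 - 2*d*int (Suc t)) = c * c * g (1 - 2*d*int t)" by simp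
    thus ?thesis using cc by simp
  qed
  have zeroA: "g (1 - 2*d*int t) = 0" if "t \<ge> 1" for t
  proof -
    have big: "g (1 - 2*d*int t) = 0" if "t \<ge> nat (2 - M)" for t
    proof -
      have "int t \<ge> 2 - M" using that by simp
      moreover have "2*d*int t \<ge> int t" using d by (simp add: mult_le_cancel_right1)
      ultimately have "1 - 2*d*int t < M" by linarith
      thus ?thesis using M by blast
    qed
    have "\<forall>t\<ge>1. t + k \<ge> nat (2 - M) \<longrightarrow> g (1 - 2*d*int t) = 0" for k
    proof (induction k)
      case 0 then show ?case using big by simp
    next
      case (Suc k)
      show ?case
      proof (intro allI impI)
        fix t assume t: "t \<ge> 1" "t + Suc k \<ge> nat (2 - M)"
        have "Suc t \<ge> 1" "Suc t + k \<ge> nat (2 - M)" using t by auto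
        hence "g (1 - 2*d*int (Suc t)) = 0" using Suc.IH by blast
        thus "g (1 - 2*d*int t) = 0" using stepA[OF t(1)] by simp
      qed
    qed
    from this[of "nat (2 - M)"] show ?thesis using that by simp
  qed
  have g1: "g 1 = -1"
  proof -
    have "g (1 - 2*d) - c * g 1 = dl $$ (1 + d) - c * dl $$ 1"
      using rec[of "1 + d"] by (simp add: algebra_simps)
    moreover have "g (1 - 2*d) = 0" using zeroA[of 1] by simp
    moreover have "dl $$ (1 + d) = 0" using d by - (rule dl_nth0; linarith)
    moreover have "dl $$ 1 = -1" by (simp add: dl_nth)
    ultimately have "- c * g 1 = c" by simp
    thus ?thesis using c by auto
  qed
  have gC: "g (1 + 2*d*int t) = 1 \<or> g (1 + 2*d*int t) = -1" for t
  proof (induction t)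
    case 0 then show ?case using g1 by simp
  next
    case (Suc t)
    have "g (1 + 2*d*int t) - c * g (1 + 2*d*int (Suc t)) = dl $$ (1 + 2*d*int t + 3*d) - c * dl $$ (1 + 2*d*int (Suc t))"
      using rec[of "1 + 2*d*int t + 3*d"] by (simp add: algebra_simps)
    moreover have "dl $$ (1 + 2*d*int t + 3*d) = 0"
    proof -
      have "d * int t \<ge> 0" using d by simp
      hence "1 + 2*d*int t + 3*d \<ge> 2" using d by linarith
      thus ?thesis by - (rule dl_nth0; linarith)
    qed
    moreover have "dl $$ (1 + 2*d*int (Suc t)) = 0"
    proof -
      have "d * int t \<ge> 0" using d by simp
      moreover have "2*d*int (Suc t) = 2*d*int t + 2*d" by (simp add: algebra_simps)
      ultimately have "1 + 2*d*int (Suc t) \<ge> 2" using d by linarith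
      thus ?thesis by - (rule dl_nth0; linarith)
    qed
    ultimately have "g (1 + 2*d*int t) = c * g (1 + 2*d*int (Suc t))" by simp
    hence "c * g (1 + 2*d*int t) = g (1 + 2*d*int (Suc t))" using cc by (simp add: mult.assoc[symmetric])
    thus ?case using Suc.IH c by auto
  qed
  from ubv obtain N where N: "\<forall>k\<ge>N. v $$ k = 0" unfolding ub_def by blast
  define t where "t = nat N"
  have "1 + 2*d*int t \<ge> N"
  proof -
    have "int t \<ge> N" unfolding t_def by simp
    moreover have "2*d*int t \<ge> int t" using d by (simp add: mult_le_cancel_right1)
    ultimately show ?thesis by linarith
  qed
  hence "g (1 + 2*d*int t) = 0" using N by (simp add: g_def)
  thus False using gC[of t] by simp
qed

lemma dl_nz: "dl \<noteq> 0"
proof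
  assume "dl = 0"
  hence "dl $$ 1 = 0" by simp
  thus False by (simp add: dl_nth)
qed

lemma no_triple:
  assumes e1: "v * (Xp (3*1) - sg 1 * Xp 1) = dl * (1 - sg 1 * Xp 1)"
    and e2: "v * (Xp (3*2) - sg 2 * Xp 2) = dl * (1 - sg 2 * Xp 2)"
  shows False
proof -
  have sg1: "sg 1 = -1" by (simp add: sg_def)
  have sg2: "sg 2 = 1" by (simp add: sg_def)
  have "dl * (- Xp 2 * v) = dl * (1 + Xp 1)"
  proof -
    have "dl * (- Xp 2 * v) = v * (Xp 3 + Xp 1)" unfolding t1 by (simp add: ac_simps)
    also have "\<dots> = dl * (1 + Xp 1)" using e1 unfolding sg1 by simp
    finally show ?thesis .
  qed
  hence a1: "- Xp 2 * v = 1 + Xp 1" using mult_left_cancel[OF dl_nz] by blast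
  have "dl * (- (Xp 3 * (Xp 2 - 1)) * v) = dl * (- (Xp 2 - 1))"
  proof -
    have "dl * (- (Xp 3 * (Xp 2 - 1)) * v) = v * (Xp 6 - Xp 2)" unfolding t2 by (simp add: ac_simps)
    also have "\<dots> = dl * (1 - Xp 2)" using e2 unfolding sg2 by simp
    also have "\<dots> = dl * (- (Xp 2 - 1))" by simp
    finally show ?thesis .
  qed
  hence "- (Xp 3 * (Xp 2 - 1)) * v = - (Xp 2 - 1)" using mult_left_cancel[OF dl_nz] by blast
  hence "(Xp 2 - 1) * (Xp 3 * v) = (Xp 2 - 1) * 1" by algebra
  moreover have "Xp 2 - 1 \<noteq> (0::int fls)"
  proof
    assume "Xp 2 - 1 = (0::int fls)"
    hence "(Xp 2 - 1 :: int fls) $$ 0 = 0" by simp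
    thus False by simp
  qed
  ultimately have a2: "Xp 3 * v = 1" using mult_left_cancel by blast
  have "Xp 1 * (- Xp 2 * v) = - (Xp 3 * v)"
    by (simp only: mult_minus_left mult_minus_right mult.assoc[symmetric] Xp_mult) simp
  also have "\<dots> = -1" using a2 by simp
  finally have "Xp 1 * (- Xp 2 * v) = -1" .
  hence "Xp 1 * (1 + Xp 1) = -1" unfolding a1 .
  moreover have "Xp 1 * (1 + Xp 1) = Xp 1 + Xp 2" by (simp add: distrib_left Xp_mult)
  ultimately have "(Xp 1 + Xp 2 :: int fls) = -1" by simp
  hence "(Xp 1 + Xp 2 :: int fls) $$ 0 = (-1 :: int fls) $$ 0" by simp
  thus False by simp
qed

lemma pair_eq:
  assumes form: "\<And>e. dl * V e = sg e * Xp e * P + Xp (3 * e) * Q"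
    and a: "V a = 1" and b: "V b = 1"
  shows "(Xp (3 * a) * Q) * (Xp (3 * (b - a)) - sg (b - a) * Xp (b - a)) = dl * (1 - sg (b - a) * Xp (b - a))"
proof -
  define d where "d = b - a"
  define u where "u = sg a * Xp a * P"
  define v where "v = Xp (3 * a) * Q"
  define s where "s = sg d * Xp d"
  define x where "x = Xp (3 * d)"
  have h1: "dl = u + v" using form[of a] a by (simp add: u_def v_def)
  have h2: "dl = u * s + v * x"
  proof -
    have "dl = sg b * Xp b * P + Xp (3 * b) * Q" using form[of b] b by simp
    also have "sg b * Xp b = (sg a * Xp a) * (sg d * Xp d)"
      using sg_add[of a d] Xp_mult[of a d] by (simp add: d_def ac_simps)
    also have "Xp (3 * b) = Xp (3 * a) * Xp (3 * d)"
      using Xp_mult[of "3*a" "3*d"] by (simp add: d_def algebra_simps)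
    finally show ?thesis by (simp add: u_def v_def s_def x_def ac_simps)
  qed
  have "v * (x - s) = dl * (1 - s)" using h1 h2 by algebra
  thus ?thesis by (simp add: v_def x_def s_def d_def)
qed


lemma braid_word_split:
  assumes j: "1 \<le> j" "j \<le> k"
  shows "braid_word idx (a(j := e)) k =
    concat (map (\<lambda>h. replicate (nat \<bar>a h\<bar>) (idx h, a h \<ge> 0)) [1..<j]) @
    replicate (nat \<bar>e\<bar>) (idx j, 0 \<le> e) @
    concat (map (\<lambda>h. replicate (nat \<bar>a h\<bar>) (idx h, a h \<ge> 0)) [Suc j..<Suc k])"
proof -
  have u: "[1..<Suc k] = [1..<j] @ j # [Suc j..<Suc k]"
  proof -
    have "[1..<Suc k] = [1..<j] @ [j..<Suc k]" using j by (metis le_SucI upt_add_eq_append le_add_diff_inverse)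
    also have "[j..<Suc k] = j # [Suc j..<Suc k]" using j by (simp add: upt_conv_Cons)
    finally show ?thesis .
  qed
  have m1: "map (\<lambda>h. replicate (nat \<bar>(a(j := e)) h\<bar>) (idx h, (a(j := e)) h \<ge> 0)) [1..<j]
      = map (\<lambda>h. replicate (nat \<bar>a h\<bar>) (idx h, a h \<ge> 0)) [1..<j]"
    by (rule map_cong) auto
  have m2: "map (\<lambda>h. replicate (nat \<bar>(a(j := e)) h\<bar>) (idx h, (a(j := e)) h \<ge> 0)) [Suc j..<Suc k]
      = map (\<lambda>h. replicate (nat \<bar>a h\<bar>) (idx h, a h \<ge> 0)) [Suc j..<Suc k]"
    by (rule map_cong) auto
  show ?thesis unfolding braid_word_def u map_append list.map(2) concat_append concat.simps(2) m1 m2 fun_upd_same ..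
qed

lemma three_elems:
  fixes S :: "int set"
  assumes "finite S" "card S \<ge> 3"
  shows "\<exists>x y z. x \<in> S \<and> y \<in> S \<and> z \<in> S \<and> x < y \<and> y < z"
proof -
  have ne: "S \<noteq> {}" using assms by auto
  define x where "x = Min S"
  define z where "z = Max S"
  have xS: "x \<in> S" and zS: "z \<in> S" using assms ne by (auto simp: x_def z_def)
  have "card (S - {x, z}) \<ge> 1"
  proof -
    have "card (S - {x, z}) \<ge> card S - card {x, z}" by (rule diff_card_le_card_Diff) simp
    moreover have "card {x, z} \<le> 2" by (simp add: card_insert_le_m1)
    ultimately show ?thesis using assms by linarith
  qed
  hence "S - {x, z} \<noteq> {}" by (metis card.empty not_one_le_zero)
  then obtain y where "y \<in> S - {x, z}" by blast
  hence y: "y \<in> S" "y \<noteq> x" "y \<noteq> z" by auto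
  have "x \<le> y" "y \<le> z" using y assms by (auto simp: x_def z_def)
  thus ?thesis using xS zS y by (intro exI[of _ x] exI[of _ y] exI[of _ z]) auto
qed

theorem lemma5p3:
  fixes n k j :: nat and idx :: "nat \<Rightarrow> nat" and a :: "nat \<Rightarrow> int"
    and V :: "int \<Rightarrow> int fls"
  assumes gens: "\<forall>h\<in>{1..k}. 1 \<le> idx h \<and> idx h < n"
    and j: "1 \<le> j" "j \<le> k"
    and V_def: "\<forall>e. V e = jones n (braid_word idx (a(j := e)) k)"
  shows "finite {e. V e = 1} \<and> card {e. V e = 1} \<le> 2 \<and>
         (\<forall>x y. V x = 1 \<longrightarrow> V y = 1 \<longrightarrow> x \<noteq> y \<longrightarrow> \<bar>x - y\<bar> \<in> {1, 2})"
proof -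
  define L where "L = concat (map (\<lambda>h. replicate (nat \<bar>a h\<bar>) (idx h, a h \<ge> 0)) [1..<j])"
  define R where "R = concat (map (\<lambda>h. replicate (nat \<bar>a h\<bar>) (idx h, a h \<ge> 0)) [Suc j..<Suc k])"
  define i where "i = idx j"
  have i: "1 \<le> i" "i < n" using gens j by (auto simp: i_def)
  have vL: "valid n L" using gens j unfolding valid_set L_def by auto
  have vR: "valid n R" using gens j unfolding valid_set R_def by auto
  define P where "P = (\<Sum>Ou\<in>Pow {..<length L + length R}. K0 (L @ R) Ou *
      (dl ^ state_loops n (L @ R) Ou - dl ^ (lp n L i R Ou - 1)))"
  define Q where "Q = (\<Sum>Ou\<in>Pow {..<length L + length R}. K0 (L @ R) Ou * dl ^ (lp n L i R Ou - 1))"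
  have form: "dl * V e = sg e * Xp e * P + Xp (3 * e) * Q" for e
  proof -
    have "V e = jones n (L @ replicate (nat \<bar>e\<bar>) (i, 0 \<le> e) @ R)"
      using V_def braid_word_split[OF j, of idx a e] by (simp add: L_def R_def i_def)
    thus ?thesis using V_formula[OF vL vR i, of e] by (simp add: P_def Q_def)
  qed
  have ubQ: "ub Q" unfolding Q_def by (rule ub_Q)
  have gap: "y - x \<in> {1, 2}" if "V x = 1" "V y = 1" "x < y" for x y
  proof (rule ccontr)
    assume "y - x \<notin> {1, 2}"
    hence d: "y - x \<ge> 3" using that(3) by auto
    have "ub (Xp (3 * x) * Q)" by (rule ub_Xp[OF ubQ])
    from no_gap[OF this d pair_eq[OF form that(1,2)]] show False .
  qed
  have pairs: "\<forall>x y. V x = 1 \<longrightarrow> V y = 1 \<longrightarrow> x \<noteq> y \<longrightarrow> \<bar>x - y\<bar> \<in> {1, 2}"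
  proof (intro allI impI)
    fix x y assume "V x = 1" "V y = 1" "x \<noteq> y"
    show "\<bar>x - y\<bar> \<in> {1, 2}"
    proof (cases "x < y")
      case True thus ?thesis using gap[OF \<open>V x = 1\<close> \<open>V y = 1\<close>] by auto
    next
      case False
      hence "y < x" using \<open>x \<noteq> y\<close> by simp
      thus ?thesis using gap[OF \<open>V y = 1\<close> \<open>V x = 1\<close>] by auto
    qed
  qed
  have fin: "finite {e. V e = 1}"
  proof (cases "{e. V e = 1} = {}")
    case True thus ?thesis by simp
  next
    case False
    then obtain x0 where x0: "V x0 = 1" by auto
    have "{e. V e = 1} \<subseteq> {x0 - 2..x0 + 2}"
    proof
      fix e assume "e \<in> {e. V e = 1}"
      hence "V e = 1" by simp
      show "e \<in> {x0 - 2..x0 + 2}"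
      proof (cases "e = x0")
        case True thus ?thesis by simp
      next
        case False
        hence "\<bar>e - x0\<bar> \<in> {1, 2}" using pairs \<open>V e = 1\<close> x0 by blast
        thus ?thesis by auto
      qed
    qed
    thus ?thesis by (rule finite_subset) simp
  qed
  have card: "card {e. V e = 1} \<le> 2"
  proof (rule ccontr)
    assume "\<not> card {e. V e = 1} \<le> 2"
    hence "card {e. V e = 1} \<ge> 3" by simp
    then obtain x y z where xyz: "V x = 1" "V y = 1" "V z = 1" "x < y" "y < z"
      using three_elems[OF fin] by blast
    have "x < z" using xyz by simp
    have "z - x \<in> {1, 2}" by (rule gap[OF xyz(1) xyz(3) \<open>x < z\<close>])
    hence yx: "y - x = 1" and zx: "z - x = 2" using xyz by auto
    have e1: "(Xp (3 * x) * Q) * (Xp (3 * 1) - sg 1 * Xp 1) = dl * (1 - sg 1 * Xp 1)"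
      using pair_eq[OF form xyz(1) xyz(2), unfolded yx] .
    have e2: "(Xp (3 * x) * Q) * (Xp (3 * 2) - sg 2 * Xp 2) = dl * (1 - sg 2 * Xp 2)"
      using pair_eq[OF form xyz(1) xyz(3), unfolded zx] .
    show False by (rule no_triple[OF e1 e2])
  qed
  show ?thesis using fin card pairs by blast
qed


end
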